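(* There is a universal constant $c$ such that the following holds. Let $T$ be a decision tree of depth $d$ computing a Boolean function $f:\{-1,1\}^n\to\{0,1\}$, and let $p=\Pr_x[f(x)=1]$ for uniform $x$. Then for every $\ell\le d$, $$\sum_{S\subseteq[n]:|S|=\ell}|\hat f(S)|\ \le\ \sqrt{c^{\ell}\binom{d}{\ell}}\cdot p\cdot\prod_{i=0}^{\ell-1}\sqrt{\log(4n^i/p)}.$$
   Context: Fourier coefficients: $\hat f(S)=\mathbb E_{x}[f(x)\prod_{i\in S}x_i]$ for $x$ uniform on $\{-1,1\}^n$. *)

theory Defs
  imports Complex_Main
begin

text \<open>Points of the Boolean cube {-1,1}^n, represented as functions nat => int that
  take values in {-1,1} on coordinates 0..n-1 and are fixed to 1 outside (canonical
  representatives, so that the cube is a finite set of size 2^n).\<close>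
definition cube :: "nat \<Rightarrow> (nat \<Rightarrow> int) set" where
  "cube n = {x. (\<forall>i<n. x i = -1 \<or> x i = 1) \<and> (\<forall>i\<ge>n. x i = 1)}"

definition cube_expect :: "nat \<Rightarrow> ((nat \<Rightarrow> int) \<Rightarrow> real) \<Rightarrow> real" where
  "cube_expect n g = (\<Sum>x\<in>cube n. g x) / 2 ^ n"

definition fourier_coeff :: "nat \<Rightarrow> ((nat \<Rightarrow> int) \<Rightarrow> real) \<Rightarrow> nat set \<Rightarrow> real" where
  "fourier_coeff n f S = cube_expect n (\<lambda>x. f x * (\<Prod>i\<in>S. real_of_int (x i)))"

datatype dtree = Leaf bool | Node nat dtree dtree

fun dt_eval :: "dtree \<Rightarrow> (nat \<Rightarrow> int) \<Rightarrow> real" where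
  "dt_eval (Leaf b) x = (if b then 1 else 0)"
| "dt_eval (Node i l r) x = (if x i = -1 then dt_eval l x else dt_eval r x)"

fun dt_depth :: "dtree \<Rightarrow> nat" where
  "dt_depth (Leaf b) = 0"
| "dt_depth (Node i l r) = Suc (max (dt_depth l) (dt_depth r))"

fun dt_vars :: "dtree \<Rightarrow> nat set" where
  "dt_vars (Leaf b) = {}"
| "dt_vars (Node i l r) = insert i (dt_vars l \<union> dt_vars r)"

definition dt_computes :: "nat \<Rightarrow> dtree \<Rightarrow> ((nat \<Rightarrow> int) \<Rightarrow> real) \<Rightarrow> bool" where
  "dt_computes n T f \<longleftrightarrow> dt_vars T \<subseteq> {..<n} \<and> (\<forall>x\<in>cube n. f x = dt_eval T x)"

end

theory Submission
  imports Defs "HOL-Library.FuncSet"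
begin

lemma cube_image:
  "cube n = (\<lambda>g i. if i < n then g i else 1) ` (PiE {..<n} (\<lambda>_. {-1,1::int}))"
proof (rule set_eqI, rule iffI)
  fix x assume x: "x \<in> cube n"
  let ?g = "restrict x {..<n}"
  have "?g \<in> PiE {..<n} (\<lambda>_. {-1,1::int})" using x by (auto simp: cube_def)
  moreover have "x = (\<lambda>i. if i < n then ?g i else 1)" using x by (auto simp: cube_def)
  ultimately show "x \<in> (\<lambda>g i. if i < n then g i else 1) ` (PiE {..<n} (\<lambda>_. {-1,1::int}))" by blast
next
  fix x assume "x \<in> (\<lambda>g i. if i < n then g i else 1) ` (PiE {..<n} (\<lambda>_. {-1,1::int}))"
  then show "x \<in> cube n" by (auto simp: cube_def PiE_def Pi_def)
qed

lemma cube_inj: "inj_on (\<lambda>g i. if i < n then g i else (1::int)) (PiE {..<n} (\<lambda>_. {-1,1::int}))"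
proof (rule inj_onI)
  fix g g' assume g: "g \<in> PiE {..<n} (\<lambda>_. {-1,1::int})" and g': "g' \<in> PiE {..<n} (\<lambda>_. {-1,1::int})"
    and e: "(\<lambda>i. if i < n then g i else (1::int)) = (\<lambda>i. if i < n then g' i else 1)"
  show "g = g'"
  proof
    fix i show "g i = g' i"
    proof (cases "i < n")
      case True then show ?thesis using fun_cong[OF e, of i] by simp
    next
      case False then show ?thesis using g g' by (auto simp: PiE_def extensional_def)
    qed
  qed
qed

lemma finite_cube: "finite (cube n)"
  by (simp add: cube_image finite_PiE)

lemma card_cube: "card (cube n) = 2 ^ n"
  by (simp add: cube_image card_image[OF cube_inj] card_PiE numeral_2_eq_2)


type_synonym hist = "(nat \<times> int) list"

definition hv :: "hist \<Rightarrow> nat set" where "hv h = fst ` set h"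

definition pt :: "hist \<Rightarrow> nat \<Rightarrow> int" where
  "pt h j = (case map_of h j of Some b \<Rightarrow> b | None \<Rightarrow> 1)"

definition Cs :: "nat \<Rightarrow> hist \<Rightarrow> (nat \<Rightarrow> int) set" where
  "Cs n h = {x \<in> cube n. \<forall>p\<in>set h. x (fst p) = snd p}"

definition flip :: "nat \<Rightarrow> (nat \<Rightarrow> int) \<Rightarrow> (nat \<Rightarrow> int)" where
  "flip i x = x(i := - x i)"

lemma hv_Cons[simp]: "hv ((i,b)#h) = insert i (hv h)"
  by (simp add: hv_def)

lemma hv_Nil[simp]: "hv [] = {}" by (simp add: hv_def)

lemma Cs_Nil[simp]: "Cs n [] = cube n" by (simp add: Cs_def)

lemma finite_Cs[simp]: "finite (Cs n h)"
  by (rule finite_subset[OF _ finite_cube[of n]]) (auto simp: Cs_def)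

lemma flip_flip[simp]: "flip i (flip i x) = x" by (simp add: flip_def)

lemma flip_cube: "i < n \<Longrightarrow> x \<in> cube n \<Longrightarrow> flip i x \<in> cube n"
  by (auto simp: cube_def flip_def)

lemma Cs_split:
  assumes "i < n" "i \<notin> hv h"
  shows "Cs n h = Cs n ((i,-1)#h) \<union> Cs n ((i,1)#h)"
    and "Cs n ((i,-1)#h) \<inter> Cs n ((i,1)#h) = {}"
  using assms by (auto simp: Cs_def cube_def)

lemma flip_bij:
  assumes "i < n" "i \<notin> hv h"
  shows "bij_betw (flip i) (Cs n ((i,-1)#h)) (Cs n ((i,1)#h))"
proof (rule bij_betw_byWitness[where f'="flip i"])
  have agree: "\<And>p x. p \<in> set h \<Longrightarrow> flip i x (fst p) = x (fst p)"
    using assms(2) by (force simp: flip_def hv_def)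
  show "\<forall>a\<in>Cs n ((i, - 1) # h). flip i (flip i a) = a" by simp
  show "\<forall>a\<in>Cs n ((i, 1) # h). flip i (flip i a) = a" by simp
  show "flip i ` Cs n ((i, - 1) # h) \<subseteq> Cs n ((i, 1) # h)"
    using assms agree by (auto simp: Cs_def flip_cube) (auto simp: flip_def)
  show "flip i ` Cs n ((i, 1) # h) \<subseteq> Cs n ((i, - 1) # h)"
    using assms agree by (auto simp: Cs_def flip_cube) (auto simp: flip_def)
qed

lemma sum_Cs_split:
  assumes "i < n" "i \<notin> hv h"
  shows "(\<Sum>x\<in>Cs n h. g x) = (\<Sum>x\<in>Cs n ((i,-1)#h). g x) + (\<Sum>x\<in>Cs n ((i,1)#h). g x)"
  by (subst Cs_split(1)[OF assms], rule sum.union_disjoint) (auto simp: Cs_split(2)[OF assms])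

lemma sum_Cs_flip:
  assumes "i < n" "i \<notin> hv h"
  shows "(\<Sum>x\<in>Cs n ((i,1)#h). g x) = (\<Sum>x\<in>Cs n ((i,-1)#h). g (flip i x))"
  using sum.reindex_bij_betw[OF flip_bij[OF assms], of g] by simp

lemma card_Cs_eq:
  assumes "i < n" "i \<notin> hv h"
  shows "card (Cs n ((i,1)#h)) = card (Cs n ((i,-1)#h))"
  using bij_betw_same_card[OF flip_bij[OF assms]] by simp

lemma card_Cs_split:
  assumes "i < n" "i \<notin> hv h"
  shows "card (Cs n h) = card (Cs n ((i,-1)#h)) + card (Cs n ((i,1)#h))"
  using sum_Cs_split[OF assms, of "\<lambda>_. 1::nat"] by simp

fun E :: "dtree \<Rightarrow> hist \<Rightarrow> (hist \<Rightarrow> bool \<Rightarrow> real) \<Rightarrow> real" where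
  "E (Leaf b) h F = F h b"
| "E (Node i L R) h F = (E L ((i,-1)#h) F + E R ((i,1)#h) F) / 2"

fun good :: "dtree \<Rightarrow> bool" where
  "good (Leaf b) = True"
| "good (Node i L R) = (i \<notin> dt_vars L \<and> i \<notin> dt_vars R \<and> good L \<and> good R)"

definition avg :: "nat \<Rightarrow> hist \<Rightarrow> ((nat \<Rightarrow> int) \<Rightarrow> real) \<Rightarrow> real" where
  "avg n h g = (\<Sum>x\<in>Cs n h. g x) / card (Cs n h)"

lemma walk_sum:
  assumes "good T" "dt_vars T \<subseteq> {..<n}" "dt_vars T \<inter> hv h = {}"
  shows "(\<Sum>x\<in>Cs n h. dt_eval T x * g x)
       = card (Cs n h) * E T h (\<lambda>h' b. (if b then 1 else 0) * avg n h' g)"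
  using assms
proof (induction T arbitrary: h)
  case (Leaf b)
  show ?case
  proof (cases "card (Cs n h) = 0")
    case True
    then have "Cs n h = {}" by simp
    then show ?thesis by simp
  next
    case False
    then show ?thesis by (simp add: avg_def sum_distrib_left[symmetric])
  qed
next
  case (Node i L R)
  have i: "i < n" "i \<notin> hv h" using Node.prems by auto
  have IL: "(\<Sum>x\<in>Cs n ((i,-1)#h). dt_eval L x * g x)
       = card (Cs n ((i,-1)#h)) * E L ((i,-1)#h) (\<lambda>h' b. (if b then 1 else 0) * avg n h' g)"
    using Node.prems by (intro Node.IH(1)) auto
  have IR: "(\<Sum>x\<in>Cs n ((i,1)#h). dt_eval R x * g x)
       = card (Cs n ((i,1)#h)) * E R ((i,1)#h) (\<lambda>h' b. (if b then 1 else 0) * avg n h' g)"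
    using Node.prems by (intro Node.IH(2)) auto
  have e1: "(\<Sum>x\<in>Cs n ((i,-1)#h). dt_eval (Node i L R) x * g x) = (\<Sum>x\<in>Cs n ((i,-1)#h). dt_eval L x * g x)"
    by (rule sum.cong) (auto simp: Cs_def)
  have e2: "(\<Sum>x\<in>Cs n ((i,1)#h). dt_eval (Node i L R) x * g x) = (\<Sum>x\<in>Cs n ((i,1)#h). dt_eval R x * g x)"
    by (rule sum.cong) (auto simp: Cs_def)
  show ?case
    using sum_Cs_split[OF i, of "\<lambda>x. dt_eval (Node i L R) x * g x"] e1 e2 IL IR
      card_Cs_split[OF i] card_Cs_eq[OF i]
    by (simp add: field_simps)
qed


lemma E_cong:
  assumes "good T"
    and "\<And>ext b. distinct (map fst ext) \<Longrightarrow> fst ` set ext \<subseteq> dt_vars T \<Longrightarrow>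
            snd ` set ext \<subseteq> {-1,1} \<Longrightarrow> length ext \<le> dt_depth T \<Longrightarrow> F (ext @ h) b = F' (ext @ h) b"
  shows "E T h F = E T h F'"
  using assms
proof (induction T arbitrary: h)
  case (Leaf b)
  then show ?case using Leaf.prems(2)[of "[]"] by simp
next
  case (Node i L R)
  have "E L ((i,-1)#h) F = E L ((i,-1)#h) F'"
  proof (rule Node.IH(1))
    show "good L" using Node.prems by simp
    fix ext :: hist and b assume a: "distinct (map fst ext)" "fst ` set ext \<subseteq> dt_vars L"
      "snd ` set ext \<subseteq> {-1,1}" "length ext \<le> dt_depth L"
    have "F ((ext @ [(i,-1)]) @ h) b = F' ((ext @ [(i,-1)]) @ h) b"
      using a Node.prems by (intro Node.prems(2)) auto
    then show "F (ext @ (i,-1) # h) b = F' (ext @ (i,-1) # h) b" by simp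
  qed
  moreover have "E R ((i,1)#h) F = E R ((i,1)#h) F'"
  proof (rule Node.IH(2))
    show "good R" using Node.prems by simp
    fix ext :: hist and b assume a: "distinct (map fst ext)" "fst ` set ext \<subseteq> dt_vars R"
      "snd ` set ext \<subseteq> {-1,1}" "length ext \<le> dt_depth R"
    have "F ((ext @ [(i,1)]) @ h) b = F' ((ext @ [(i,1)]) @ h) b"
      using a Node.prems by (intro Node.prems(2)) auto
    then show "F (ext @ (i,1) # h) b = F' (ext @ (i,1) # h) b" by simp
  qed
  ultimately show ?case by simp
qed

definition Gx :: "nat \<Rightarrow> (nat set \<Rightarrow> real) \<Rightarrow> nat set \<Rightarrow> (nat \<Rightarrow> int) \<Rightarrow> real" where
  "Gx k s V x = (\<Sum>S\<in>{S. S \<subseteq> V \<and> card S = k}. s S * (\<Prod>j\<in>S. real_of_int (x j)))"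

lemma Gx_cong: "(\<And>j. j \<in> V \<Longrightarrow> x j = y j) \<Longrightarrow> Gx k s V x = Gx k s V y"
  unfolding Gx_def by (intro sum.cong refl arg_cong2[where f="(*)"] prod.cong) auto

lemma Gx_0: "finite V \<Longrightarrow> Gx 0 s V x = s {}"
proof -
  assume "finite V"
  then have "{S. S \<subseteq> V \<and> card S = 0} = {{}}" by (auto dest: finite_subset)
  then show ?thesis by (simp add: Gx_def)
qed

lemma Gx_split:
  assumes "finite V" "i \<notin> V"
  shows "Gx (Suc k) s (insert i V) x = Gx (Suc k) s V x + real_of_int (x i) * Gx k (\<lambda>S. s (insert i S)) V x"
proof -
  let ?A = "{S. S \<subseteq> V \<and> card S = Suc k}"
  let ?B = "{S. S \<subseteq> V \<and> card S = k}"
  have fin: "\<And>S. S \<subseteq> V \<Longrightarrow> finite S" using assms(1) finite_subset by blast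
  have eq: "{S. S \<subseteq> insert i V \<and> card S = Suc k} = ?A \<union> insert i ` ?B"
  proof (rule set_eqI, rule iffI)
    fix S assume S: "S \<in> {S. S \<subseteq> insert i V \<and> card S = Suc k}"
    show "S \<in> ?A \<union> insert i ` ?B"
    proof (cases "i \<in> S")
      case True
      have f: "finite S" using S assms(1) finite_subset by auto
      have "S - {i} \<in> ?B" using S True f by auto
      moreover have "S = insert i (S - {i})" using True by auto
      ultimately show ?thesis by blast
    next
      case False then show ?thesis using S by auto
    qed
  next
    fix S assume "S \<in> ?A \<union> insert i ` ?B"
    then show "S \<in> {S. S \<subseteq> insert i V \<and> card S = Suc k}"
      using assms fin by (auto simp: card_insert_if)
  qed
  have disj: "?A \<inter> insert i ` ?B = {}" using assms by auto
  have inj: "inj_on (insert i) ?B"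
    by (rule inj_onI) (metis (no_types, lifting) assms(2) insert_ident mem_Collect_eq subsetD)
  have finA: "finite ?A" using assms(1) by simp
  have finB: "finite ?B" using assms(1) by simp
  have "Gx (Suc k) s (insert i V) x = (\<Sum>S\<in>?A. s S * (\<Prod>j\<in>S. real_of_int (x j)))
        + (\<Sum>S\<in>insert i ` ?B. s S * (\<Prod>j\<in>S. real_of_int (x j)))"
    unfolding Gx_def eq by (rule sum.union_disjoint) (use finA finB disj in auto)
  also have "(\<Sum>S\<in>insert i ` ?B. s S * (\<Prod>j\<in>S. real_of_int (x j)))
     = (\<Sum>S\<in>?B. s (insert i S) * (\<Prod>j\<in>insert i S. real_of_int (x j)))"
    by (rule sum.reindex[OF inj, unfolded comp_def])
  also have "\<dots> = (\<Sum>S\<in>?B. real_of_int (x i) * (s (insert i S) * (\<Prod>j\<in>S. real_of_int (x j))))"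
  proof (rule sum.cong[OF refl])
    fix S assume S: "S \<in> ?B"
    then have "finite S" "i \<notin> S" using fin assms(2) by auto
    then show "s (insert i S) * (\<Prod>j\<in>insert i S. real_of_int (x j)) = real_of_int (x i) * (s (insert i S) * (\<Prod>j\<in>S. real_of_int (x j)))"
      by simp
  qed
  finally show ?thesis by (simp add: Gx_def sum_distrib_left)
qed

lemma Cs_pt: "x \<in> Cs n h \<Longrightarrow> j \<in> hv h \<Longrightarrow> x j = pt h j"
proof -
  assume x: "x \<in> Cs n h" and j: "j \<in> hv h"
  then obtain b where "map_of h j = Some b"
    by (metis hv_def image_iff option.exhaust map_of_eq_None_iff)
  then have "(j,b) \<in> set h" "pt h j = b" by (auto simp: pt_def dest: map_of_SomeD)
  then show ?thesis using x by (auto simp: Cs_def)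
qed

lemma finite_hv[simp]: "finite (hv h)" by (simp add: hv_def)

lemma zero_flip:
  assumes "i < n" "i \<notin> hv h" "\<And>x. g (flip i x) = g x"
  shows "(\<Sum>x\<in>Cs n h. real_of_int (x i) * g x) = 0"
proof -
  have "(\<Sum>x\<in>Cs n ((i,1)#h). real_of_int (x i) * g x) = (\<Sum>x\<in>Cs n ((i,-1)#h). - (real_of_int (x i) * g x))"
    unfolding sum_Cs_flip[OF assms(1,2)] using assms(3) by (intro sum.cong) (auto simp: flip_def)
  then show ?thesis unfolding sum_Cs_split[OF assms(1,2)] by (simp add: sum_negf)
qed

lemma Cs_Gx_aux:
  assumes "finite F"
  shows "F \<subseteq> {..<n} \<Longrightarrow> F \<inter> hv h = {} \<Longrightarrow>
    (\<Sum>x\<in>Cs n h. Gx k s (hv h \<union> F) x) = card (Cs n h) * Gx k s (hv h) (pt h)"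
  using assms
proof (induction F arbitrary: k s rule: finite_induct)
  case empty
  have "(\<Sum>x\<in>Cs n h. Gx k s (hv h) x) = (\<Sum>x\<in>Cs n h. Gx k s (hv h) (pt h))"
    by (intro sum.cong refl Gx_cong) (auto intro: Cs_pt)
  then show ?case by simp
next
  case (insert i F)
  have i: "i < n" "i \<notin> hv h" using insert.prems by auto
  show ?case
  proof (cases k)
    case 0
    have "(\<Sum>x\<in>Cs n h. Gx k s (hv h \<union> insert i F) x) = (\<Sum>x\<in>Cs n h. s {})"
      using insert.hyps 0 by (intro sum.cong refl) (simp add: Gx_0)
    then show ?thesis using 0 by (simp add: Gx_0)
  next
    case (Suc k')
    have V: "hv h \<union> insert i F = insert i (hv h \<union> F)" by auto
    have iV: "i \<notin> hv h \<union> F" using i insert.hyps by auto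
    have "(\<Sum>x\<in>Cs n h. Gx k s (hv h \<union> insert i F) x)
       = (\<Sum>x\<in>Cs n h. Gx k s (hv h \<union> F) x) + (\<Sum>x\<in>Cs n h. real_of_int (x i) * Gx k' (\<lambda>S. s (insert i S)) (hv h \<union> F) x)"
      unfolding V Suc using Gx_split[OF _ iV] insert.hyps by (simp add: sum.distrib)
    also have "(\<Sum>x\<in>Cs n h. real_of_int (x i) * Gx k' (\<lambda>S. s (insert i S)) (hv h \<union> F) x) = 0"
      by (rule zero_flip[OF i]) (rule Gx_cong, use iV in \<open>auto simp: flip_def\<close>)
    finally show ?thesis using insert by simp
  qed
qed

lemma Cs_Gx:
  assumes "hv h \<subseteq> {..<n}"
  shows "(\<Sum>x\<in>Cs n h. Gx k s {..<n} x) = card (Cs n h) * Gx k s (hv h) (pt h)"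
proof -
  have "{..<n} = hv h \<union> ({..<n} - hv h)" using assms by auto
  then show ?thesis using Cs_Gx_aux[of "{..<n} - hv h" n h k s] by auto
qed

lemma pt_in_Cs:
  assumes "distinct (map fst h)" "hv h \<subseteq> {..<n}" "snd ` set h \<subseteq> {-1,1}"
  shows "pt h \<in> Cs n h"
proof -
  have "\<And>p. p \<in> set h \<Longrightarrow> pt h (fst p) = snd p"
    using assms(1) by (auto simp: pt_def)
  moreover have "pt h \<in> cube n"
  proof -
    have "\<And>j. j \<in> hv h \<Longrightarrow> pt h j = -1 \<or> pt h j = 1"
    proof -
      fix j assume "j \<in> hv h"
      then obtain b where "map_of h j = Some b"
        by (metis hv_def image_iff option.exhaust map_of_eq_None_iff)
      then show "pt h j = -1 \<or> pt h j = 1" using assms(3) by (force simp: pt_def dest: map_of_SomeD)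
    qed
    moreover have "\<And>j. j \<notin> hv h \<Longrightarrow> pt h j = 1"
    proof -
      fix j assume "j \<notin> hv h"
      then have "map_of h j = None" by (simp add: hv_def map_of_eq_None_iff)
      then show "pt h j = 1" by (simp add: pt_def)
    qed
    moreover have "\<And>j. n \<le> j \<Longrightarrow> j \<notin> hv h" using assms(2) by auto
    ultimately show ?thesis unfolding cube_def by auto
  qed
  ultimately show ?thesis by (auto simp: Cs_def)
qed

lemma fourier_walk:
  assumes "good T" "dt_vars T \<subseteq> {..<n}"
  shows "(\<Sum>x\<in>cube n. dt_eval T x * Gx k s {..<n} x)
     = 2 ^ n * E T [] (\<lambda>h b. (if b then 1 else 0) * Gx k s (hv h) (pt h))"
proof -
  have "(\<Sum>x\<in>cube n. dt_eval T x * Gx k s {..<n} x)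
     = card (Cs n []) * E T [] (\<lambda>h' b. (if b then 1 else 0) * avg n h' (Gx k s {..<n}))"
    using walk_sum[OF assms, of "[]"] by simp
  also have "E T [] (\<lambda>h' b. (if b then 1 else 0) * avg n h' (Gx k s {..<n}))
      = E T [] (\<lambda>h b. (if b then 1 else 0) * Gx k s (hv h) (pt h))"
  proof (rule E_cong[OF assms(1)])
    fix ext :: hist and b
    assume a: "distinct (map fst ext)" "fst ` set ext \<subseteq> dt_vars T" "snd ` set ext \<subseteq> {-1,1}"
    have hvs: "hv (ext @ []) \<subseteq> {..<n}" using a(2) assms(2) by (auto simp: hv_def)
    have "pt (ext @ []) \<in> Cs n (ext @ [])" using a hvs by (intro pt_in_Cs) auto
    then have "card (Cs n (ext @ [])) \<noteq> 0" by (metis card_0_eq empty_iff finite_Cs)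
    then show "(if b then 1 else 0) * avg n (ext @ []) (Gx k s {..<n}) =
         (if b then 1 else 0) * Gx k s (hv (ext @ [])) (pt (ext @ []))"
      unfolding avg_def Cs_Gx[OF hvs] by simp
  qed
  finally show ?thesis by (simp add: card_cube)
qed

fun prune :: "dtree \<Rightarrow> hist \<Rightarrow> dtree" where
  "prune (Leaf b) h = Leaf b"
| "prune (Node i L R) h = (case map_of h i of
     Some b \<Rightarrow> (if b = -1 then prune L h else prune R h)
   | None \<Rightarrow> Node i (prune L ((i,-1)#h)) (prune R ((i,1)#h)))"

lemma prune_vars: "dt_vars (prune T h) \<subseteq> dt_vars T - hv h"
proof (induction T arbitrary: h)
  case (Leaf b) then show ?case by simp
next
  case (Node i L R)
  show ?case
  proof (cases "map_of h i")
    case None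
    then have "i \<notin> hv h" by (simp add: hv_def map_of_eq_None_iff)
    then show ?thesis using None Node.IH[of "(i,-1)#h"] Node.IH[of "(i,1)#h"] by auto
  next
    case (Some b)
    then show ?thesis using Node.IH[of h] by auto
  qed
qed

lemma prune_good: "good (prune T h)"
proof (induction T arbitrary: h)
  case (Leaf b) then show ?case by simp
next
  case (Node i L R)
  show ?case
  proof (cases "map_of h i")
    case None
    then show ?thesis using Node.IH prune_vars[of L "(i,-1)#h"] prune_vars[of R "(i,1)#h"] by auto
  next
    case (Some b)
    then show ?thesis using Node.IH by auto
  qed
qed

lemma prune_depth: "dt_depth (prune T h) \<le> dt_depth T"
proof (induction T arbitrary: h)
  case (Leaf b) then show ?case by simp
next
  case (Node i L R)
  show ?case
  proof (cases "map_of h i")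
    case None
    have "dt_depth (prune L ((i,-1)#h)) \<le> dt_depth L" "dt_depth (prune R ((i,1)#h)) \<le> dt_depth R"
      using Node.IH by auto
    then have "max (dt_depth (prune L ((i,-1)#h))) (dt_depth (prune R ((i,1)#h))) \<le> max (dt_depth L) (dt_depth R)"
      by (rule max.mono)
    then show ?thesis using None by simp
  next
    case (Some b)
    have "dt_depth (prune L h) \<le> dt_depth L" "dt_depth (prune R h) \<le> dt_depth R"
      using Node.IH by auto
    moreover have "dt_depth L \<le> Suc (max (dt_depth L) (dt_depth R))" "dt_depth R \<le> Suc (max (dt_depth L) (dt_depth R))"
      by auto
    ultimately show ?thesis using Some by auto
  qed
qed

lemma prune_eval:
  assumes "\<forall>j. x j = -1 \<or> x j = 1" "\<forall>p\<in>set h. x (fst p) = snd p"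
  shows "dt_eval (prune T h) x = dt_eval T x"
  using assms(2)
proof (induction T arbitrary: h)
  case (Leaf b) then show ?case by simp
next
  case (Node i L R)
  show ?case
  proof (cases "map_of h i")
    case None
    show ?thesis
    proof (cases "x i = -1")
      case True
      then show ?thesis using None Node.IH(1)[of "(i,-1)#h"] Node.prems by auto
    next
      case False
      then have "x i = 1" using assms(1) by metis
      then show ?thesis using None Node.IH(2)[of "(i,1)#h"] Node.prems by auto
    qed
  next
    case (Some b)
    then have "(i,b) \<in> set h" by (rule map_of_SomeD)
    then have "x i = b" using Node.prems by force
    then show ?thesis using Some Node.IH(1)[of h] Node.IH(2)[of h] Node.prems by auto
  qed
qed

lemma finite_vars[simp]: "finite (dt_vars T)"
  by (induction T) auto

lemma good_depth: "good T \<Longrightarrow> dt_depth T \<le> card (dt_vars T)"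
proof (induction T)
  case (Leaf b) then show ?case by simp
next
  case (Node i L R)
  have "card (dt_vars L) \<le> card (dt_vars L \<union> dt_vars R)" "card (dt_vars R) \<le> card (dt_vars L \<union> dt_vars R)"
    by (auto intro: card_mono)
  then show ?case using Node by (auto simp: card_insert_if)
qed

lemma E_cong2: "(\<And>ext b. F (ext @ h) b = F' (ext @ h) b) \<Longrightarrow> E T h F = E T h F'"
proof (induction T arbitrary: h)
  case (Leaf b) then show ?case using Leaf[of "[]"] by simp
next
  case (Node i L R)
  have "E L ((i,-1)#h) F = E L ((i,-1)#h) F'"
    by (rule Node.IH(1)) (metis Node.prems append.assoc append_Cons append_Nil)
  moreover have "E R ((i,1)#h) F = E R ((i,1)#h) F'"
    by (rule Node.IH(2)) (metis Node.prems append.assoc append_Cons append_Nil)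
  ultimately show ?case by simp
qed

lemma E_nonneg: "(\<And>h b. 0 \<le> F h b) \<Longrightarrow> 0 \<le> E T h F"
  by (induction T arbitrary: h) auto

lemma E_le1:
  assumes "\<And>h b. F h b \<le> 1" shows "E T h F \<le> 1"
proof (induction T arbitrary: h)
  case (Leaf b) then show ?case using assms by simp
next
  case (Node i L R)
  have "E L ((i,-1)#h) F \<le> 1" "E R ((i,1)#h) F \<le> 1" using Node.IH by auto
  then show ?case by simp
qed

lemma E_add: "E T h (\<lambda>h b. F h b + F' h b) = E T h F + E T h F'"
  by (induction T arbitrary: h) (auto simp: field_simps)

lemma E_cmult: "E T h (\<lambda>h b. c * F h b) = c * E T h F"
  by (induction T arbitrary: h) (auto simp: field_simps)

lemma E_const: "E T h (\<lambda>h b. c) = c"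
  by (induction T arbitrary: h) auto

lemma E_mono: "(\<And>h b. F h b \<le> F' h b) \<Longrightarrow> E T h F \<le> E T h F'"
  by (induction T arbitrary: h) (auto intro: add_mono divide_right_mono)

lemma E_zero:
  assumes "\<And>h b. 0 \<le> w h b" "E T h w = 0"
  shows "E T h (\<lambda>h b. w h b * g h b) = 0"
  using assms(2)
proof (induction T arbitrary: h)
  case (Leaf b) then show ?case by simp
next
  case (Node i L R)
  have "0 \<le> E L ((i,-1)#h) w" "0 \<le> E R ((i,1)#h) w" using assms(1) by (auto intro: E_nonneg)
  then have "E L ((i,-1)#h) w = 0" "E R ((i,1)#h) w = 0" using Node.prems by auto
  then show ?case using Node.IH by simp
qed

fun PSE :: "dtree \<Rightarrow> hist \<Rightarrow> (hist \<Rightarrow> bool \<Rightarrow> real) \<Rightarrow> (hist \<Rightarrow> nat \<Rightarrow> int \<Rightarrow> real) \<Rightarrow> real" where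
  "PSE (Leaf b) h w \<phi> = 0"
| "PSE (Node i L R) h w \<phi> = (E L ((i,-1)#h) w * \<phi> h i (-1) + PSE L ((i,-1)#h) w \<phi>
      + E R ((i,1)#h) w * \<phi> h i 1 + PSE R ((i,1)#h) w \<phi>) / 2"

lemma PSE_add: "PSE T h w (\<lambda>h i b. \<phi> h i b + \<psi> h i b) = PSE T h w \<phi> + PSE T h w \<psi>"
  by (induction T arbitrary: h) (auto simp: field_simps)

lemma PSE_cmult: "PSE T h w (\<lambda>h i b. c * \<phi> h i b) = c * PSE T h w \<phi>"
  by (induction T arbitrary: h) (auto simp: field_simps)

lemma PSE_mono:
  assumes "\<And>h b. 0 \<le> w h b" "\<And>h i. \<phi> h i (-1) \<le> \<psi> h i (-1)" "\<And>h i. \<phi> h i 1 \<le> \<psi> h i 1"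
  shows "PSE T h w \<phi> \<le> PSE T h w \<psi>"
proof (induction T arbitrary: h)
  case (Leaf b) then show ?case by simp
next
  case (Node i L R)
  have "E L ((i,-1)#h) w * \<phi> h i (-1) \<le> E L ((i,-1)#h) w * \<psi> h i (-1)"
    using assms by (intro mult_left_mono E_nonneg) auto
  moreover have "E R ((i,1)#h) w * \<phi> h i 1 \<le> E R ((i,1)#h) w * \<psi> h i 1"
    using assms by (intro mult_left_mono E_nonneg) auto
  ultimately show ?case using Node.IH[of "(i,-1)#h"] Node.IH[of "(i,1)#h"] by simp
qed

lemma cosh_bound: "exp (a - a\<^sup>2) + exp (- a - a\<^sup>2) \<le> (2::real)"
proof -
  have key: "exp t + exp (-t) \<le> 2 * exp (t\<^sup>2)" if t: "0 \<le> t" for t :: real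
  proof (cases "t \<le> 1")
    case True
    have e1: "exp t \<le> 1 + t + t\<^sup>2" using exp_bound[OF t True] .
    have "1 + t > 0" using t by simp
    have "(1 + t) * (1 - t + t\<^sup>2) \<ge> 1" using t by (simp add: algebra_simps power2_eq_square)
    moreover have "exp t \<ge> 1 + t" by simp
    moreover have "0 \<le> 1 - t + t\<^sup>2" using True t by simp
    ultimately have "exp t * (1 - t + t\<^sup>2) \<ge> 1"
      using mult_right_mono[of "1 + t" "exp t" "1 - t + t\<^sup>2"] by linarith
    then have e2: "exp (-t) \<le> 1 - t + t\<^sup>2"
      by (simp add: exp_minus field_simps)
    have "1 + t\<^sup>2 \<le> exp (t\<^sup>2)" by simp
    then show ?thesis using e1 e2 by linarith
  next
    case False
    then have "t \<le> t\<^sup>2" by (simp add: power2_eq_square)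
    then have "exp t \<le> exp (t\<^sup>2)" by simp
    moreover have "exp (-t) \<le> 1" using t by simp
    moreover have "1 \<le> exp (t\<^sup>2)" by simp
    ultimately show ?thesis by linarith
  qed
  have "exp a + exp (-a) \<le> 2 * exp (a\<^sup>2)"
  proof (cases "0 \<le> a")
    case True then show ?thesis using key[of a] by simp
  next
    case False then show ?thesis using key[of "-a"] by simp
  qed
  then have "(exp a + exp (-a)) * exp (- a\<^sup>2) \<le> 2 * exp (a\<^sup>2) * exp (- a\<^sup>2)"
    by (intro mult_right_mono) auto
  moreover have "exp (a - a\<^sup>2) + exp (- a - a\<^sup>2) = (exp a + exp (-a)) * exp (- a\<^sup>2)"
    by (simp add: distrib_right exp_add[symmetric])
  moreover have "2 * exp (a\<^sup>2) * exp (- a\<^sup>2) = 2"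
    by (simp add: mult.assoc exp_add[symmetric])
  ultimately show ?thesis by simp
qed

lemma two_point:
  fixes x y u v :: real
  assumes "0 \<le> x" "0 \<le> y" "0 < x + y"
  shows "x * (u - ln x) + y * (v - ln y) \<le> (x + y) * ln ((exp u + exp v) / (x + y))"
proof -
  have Z: "0 < exp u + exp v" by (simp add: add_pos_pos)
  consider "x = 0" | "y = 0" | "0 < x" "0 < y" using assms by linarith
  then show ?thesis
  proof cases
    case 1
    then have "y > 0" using assms by simp
    have "exp v / y \<le> (exp u + exp v) / y" using \<open>y > 0\<close> by (intro divide_right_mono) auto
    then have "ln (exp v / y) \<le> ln ((exp u + exp v) / y)" using \<open>y > 0\<close> by (subst ln_le_cancel_iff) (auto intro!: divide_pos_pos add_pos_pos)
    then show ?thesis using 1 \<open>y>0\<close> by (simp add: ln_div)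
  next
    case 2
    then have "x > 0" using assms by simp
    have "exp u / x \<le> (exp u + exp v) / x" using \<open>x > 0\<close> by (intro divide_right_mono) auto
    then have "ln (exp u / x) \<le> ln ((exp u + exp v) / x)" using \<open>x > 0\<close> by (subst ln_le_cancel_iff) (auto intro!: divide_pos_pos add_pos_pos)
    then show ?thesis using 2 \<open>x>0\<close> by (simp add: ln_div)
  next
    case 3
    let ?Z = "exp u + exp v" and ?P = "x + y"
    have a: "ln (exp u * ?P / (x * ?Z)) \<le> exp u * ?P / (x * ?Z) - 1"
      using 3 Z by (intro ln_le_minus_one) (simp add: add_pos_pos)
    have b: "ln (exp v * ?P / (y * ?Z)) \<le> exp v * ?P / (y * ?Z) - 1"
      using 3 Z by (intro ln_le_minus_one) (simp add: add_pos_pos)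
    have Pp: "0 < ?P" using 3 by simp
    have la: "ln (exp u * ?P / (x * ?Z)) = u + ln ?P - ln x - ln ?Z"
    proof -
      have "ln (exp u * ?P / (x * ?Z)) = ln (exp u * ?P) - ln (x * ?Z)"
        using 3 Z Pp by (simp add: ln_div)
      also have "\<dots> = (u + ln ?P) - (ln x + ln ?Z)"
        using 3 Z Pp by (simp add: ln_mult)
      finally show ?thesis by simp
    qed
    have lb: "ln (exp v * ?P / (y * ?Z)) = v + ln ?P - ln y - ln ?Z"
    proof -
      have "ln (exp v * ?P / (y * ?Z)) = ln (exp v * ?P) - ln (y * ?Z)"
        using 3 Z Pp by (simp add: ln_div)
      also have "\<dots> = (v + ln ?P) - (ln y + ln ?Z)"
        using 3 Z Pp by (simp add: ln_mult)
      finally show ?thesis by simp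
    qed
    have "x * (u + ln ?P - ln x - ln ?Z) + y * (v + ln ?P - ln y - ln ?Z)
        \<le> x * (exp u * ?P / (x * ?Z) - 1) + y * (exp v * ?P / (y * ?Z) - 1)"
      using a b la lb 3 by (intro add_mono mult_left_mono) auto
    also have "\<dots> = 0"
    proof -
      have "x * (exp u * ?P / (x * ?Z)) = exp u * ?P / ?Z" using 3 by simp
      moreover have "y * (exp v * ?P / (y * ?Z)) = exp v * ?P / ?Z" using 3 by simp
      moreover have "exp u * ?P / ?Z + exp v * ?P / ?Z = (?Z * ?P) / ?Z"
        by (simp add: add_divide_distrib distrib_right)
      moreover have "(?Z * ?P) / ?Z = ?P" using Z by simp
      ultimately show ?thesis by (simp add: algebra_simps)
    qed
    finally have "x * (u - ln x) + y * (v - ln y) \<le> ?P * (ln ?Z - ln ?P)"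
      by (simp add: algebra_simps)
    moreover have "ln (?Z / ?P) = ln ?Z - ln ?P" using Z Pp by (simp add: ln_div)
    ultimately show ?thesis by simp
  qed
qed

lemma gibbs_step:
  fixes a x y :: real
  assumes "0 \<le> x" "x \<le> 1" "0 \<le> y" "y \<le> 1"
  shows "(y * (a * (-1) - a\<^sup>2) - y * ln y + x * (a * 1 - a\<^sup>2) - x * ln x) / 2
       \<le> - ((y + x) / 2) * ln ((y + x) / 2)"
proof (cases "x + y = 0")
  case True
  then have "x = 0" "y = 0" using assms by auto
  then show ?thesis by simp
next
  case False
  then have P: "0 < x + y" using assms by simp
  have "x * ((a - a\<^sup>2) - ln x) + y * ((-a - a\<^sup>2) - ln y)
      \<le> (x + y) * ln ((exp (a - a\<^sup>2) + exp (-a - a\<^sup>2)) / (x + y))"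
    by (rule two_point[OF assms(1,3) P])
  also have "\<dots> \<le> (x + y) * ln (2 / (x + y))"
  proof (intro mult_left_mono)
    have "(exp (a - a\<^sup>2) + exp (-a - a\<^sup>2)) / (x + y) \<le> 2 / (x + y)"
      using cosh_bound[of a] P by (intro divide_right_mono) auto
    then show "ln ((exp (a - a\<^sup>2) + exp (-a - a\<^sup>2)) / (x + y)) \<le> ln (2 / (x + y))"
      using P by (subst ln_le_cancel_iff) (auto intro!: divide_pos_pos add_pos_pos)
  qed (use P in auto)
  also have "\<dots> = - (x + y) * ln ((y + x) / 2)"
    using P by (simp add: ln_div algebra_simps)
  finally have f: "x * ((a - a\<^sup>2) - ln x) + y * ((-a - a\<^sup>2) - ln y) \<le> - (x + y) * ln ((y + x) / 2)" .
  have e: "(y * (a * (-1) - a\<^sup>2) - y * ln y + x * (a * 1 - a\<^sup>2) - x * ln x) / 2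
     = (x * ((a - a\<^sup>2) - ln x) + y * ((-a - a\<^sup>2) - ln y)) / 2" by (simp add: algebra_simps)
  have e2: "- ((y + x) / 2) * ln ((y + x) / 2) = (- (x + y) * ln ((y + x) / 2)) / 2"
    by (simp add: algebra_simps)
  show ?thesis unfolding e e2 using divide_right_mono[OF f, of 2] by simp
qed

lemma gibbs:
  assumes "\<And>h b. 0 \<le> w h b" "\<And>h b. w h b \<le> 1"
  shows "PSE T h w (\<lambda>h i b. a h i * real_of_int b - (a h i)\<^sup>2) \<le> - E T h w * ln (E T h w)"
proof (induction T arbitrary: h)
  case (Leaf b)
  have "0 \<le> w h b" "w h b \<le> 1" using assms by auto
  then have "w h b * ln (w h b) \<le> 0"
    by (cases "w h b = 0") (auto intro: mult_nonneg_nonpos)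
  then show ?case by simp
next
  case (Node i L R)
  let ?y = "E L ((i,-1)#h) w" and ?x = "E R ((i,1)#h) w"
  have r: "0 \<le> ?x" "?x \<le> 1" "0 \<le> ?y" "?y \<le> 1" using assms by (auto intro: E_nonneg E_le1)
  have "PSE (Node i L R) h w (\<lambda>h i b. a h i * real_of_int b - (a h i)\<^sup>2)
     \<le> (?y * (a h i * (-1) - (a h i)\<^sup>2) - ?y * ln ?y + ?x * (a h i * 1 - (a h i)\<^sup>2) - ?x * ln ?x) / 2"
    using Node.IH[of "(i,-1)#h"] Node.IH[of "(i,1)#h"] by simp
  also have "\<dots> \<le> - ((?y + ?x) / 2) * ln ((?y + ?x) / 2)"
    by (rule gibbs_step[OF r])
  finally show ?case by simp
qed

definition Gh :: "nat \<Rightarrow> (nat set \<Rightarrow> real) \<Rightarrow> hist \<Rightarrow> real" where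
  "Gh k s h = Gx k s (hv h) (pt h)"

lemma pt_Cons_other: "j \<noteq> i \<Longrightarrow> pt ((i,b)#h) j = pt h j"
  by (simp add: pt_def)

lemma pt_Cons_same: "pt ((i,b)#h) i = b"
  by (simp add: pt_def)

lemma Gh_step:
  assumes "i \<notin> hv h"
  shows "Gh (Suc k) s ((i,b)#h) = Gh (Suc k) s h + real_of_int b * Gh k (\<lambda>S. s (insert i S)) h"
proof -
  have "Gh (Suc k) s ((i,b)#h) = Gx (Suc k) s (insert i (hv h)) (pt ((i,b)#h))"
    by (simp add: Gh_def)
  also have "\<dots> = Gx (Suc k) s (hv h) (pt ((i,b)#h)) + real_of_int b * Gx k (\<lambda>S. s (insert i S)) (hv h) (pt ((i,b)#h))"
    using Gx_split[OF finite_hv assms] by (simp add: pt_Cons_same)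
  also have "Gx (Suc k) s (hv h) (pt ((i,b)#h)) = Gx (Suc k) s (hv h) (pt h)"
    using assms by (intro Gx_cong) (metis pt_Cons_other)
  also have "Gx k (\<lambda>S. s (insert i S)) (hv h) (pt ((i,b)#h)) = Gx k (\<lambda>S. s (insert i S)) (hv h) (pt h)"
    using assms by (intro Gx_cong) (metis pt_Cons_other)
  finally show ?thesis by (simp add: Gh_def)
qed

lemma Gh_Nil: "Gh (Suc k) s [] = 0"
proof -
  have e: "{S. S \<subseteq> hv [] \<and> card S = Suc k} = {}" by auto
  show ?thesis unfolding Gh_def Gx_def e by simp
qed

lemma Gh_0: "Gh 0 s h = s {}"
  by (simp add: Gh_def Gx_0)

lemma Gh_cmult: "Gh k (\<lambda>S. c * s S) h = c * Gh k s h"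
  by (simp add: Gh_def Gx_def sum_distrib_left mult.assoc)

lemma mart:
  assumes "good T" "dt_vars T \<inter> hv h = {}"
  shows "E T h (\<lambda>h' b. w h' b * Gh (Suc k) s h')
       = E T h w * Gh (Suc k) s h + PSE T h w (\<lambda>h i b. real_of_int b * Gh k (\<lambda>S. s (insert i S)) h)"
  using assms
proof (induction T arbitrary: h)
  case (Leaf b) then show ?case by simp
next
  case (Node i L R)
  have i: "i \<notin> hv h" using Node.prems by auto
  have IL: "E L ((i,-1)#h) (\<lambda>h' b. w h' b * Gh (Suc k) s h')
     = E L ((i,-1)#h) w * Gh (Suc k) s ((i,-1)#h) + PSE L ((i,-1)#h) w (\<lambda>h i b. real_of_int b * Gh k (\<lambda>S. s (insert i S)) h)"
    using Node.prems by (intro Node.IH(1)) auto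
  have IR: "E R ((i,1)#h) (\<lambda>h' b. w h' b * Gh (Suc k) s h')
     = E R ((i,1)#h) w * Gh (Suc k) s ((i,1)#h) + PSE R ((i,1)#h) w (\<lambda>h i b. real_of_int b * Gh k (\<lambda>S. s (insert i S)) h)"
    using Node.prems by (intro Node.IH(2)) auto
  show ?case using IL IR Gh_step[OF i, of k s "-1"] Gh_step[OF i, of k s 1]
    by (simp add: field_simps)
qed

lemma PSE_depth:
  assumes "\<And>h b. 0 \<le> w h b" "\<And>t. 0 \<le> \<psi> t" "\<And>h' i b. \<phi> h' i b \<le> \<psi> (length h')"
  shows "PSE T h w \<phi> \<le> E T h w * (\<Sum>t\<in>{length h..<length h + dt_depth T}. \<psi> t)"
proof (induction T arbitrary: h)
  case (Leaf b) then show ?case by simp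
next
  case (Node i L R)
  let ?m = "max (dt_depth L) (dt_depth R)"
  let ?S = "\<Sum>t\<in>{Suc (length h)..<Suc (length h) + ?m}. \<psi> t"
  have sL: "(\<Sum>t\<in>{Suc (length h)..<Suc (length h) + dt_depth L}. \<psi> t) \<le> ?S"
    using assms(2) by (intro sum_mono2) auto
  have sR: "(\<Sum>t\<in>{Suc (length h)..<Suc (length h) + dt_depth R}. \<psi> t) \<le> ?S"
    using assms(2) by (intro sum_mono2) auto
  have eL: "0 \<le> E L ((i,-1)#h) w" and eR: "0 \<le> E R ((i,1)#h) w" using assms(1) by (auto intro: E_nonneg)
  have pL: "PSE L ((i,-1)#h) w \<phi> \<le> E L ((i,-1)#h) w * ?S"
    using Node.IH(1)[of "(i,-1)#h"] mult_left_mono[OF sL eL] by simp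
  have pR: "PSE R ((i,1)#h) w \<phi> \<le> E R ((i,1)#h) w * ?S"
    using Node.IH(2)[of "(i,1)#h"] mult_left_mono[OF sR eR] by simp
  have fL: "E L ((i,-1)#h) w * \<phi> h i (-1) \<le> E L ((i,-1)#h) w * \<psi> (length h)"
    using assms(3) eL by (intro mult_left_mono) auto
  have fR: "E R ((i,1)#h) w * \<phi> h i 1 \<le> E R ((i,1)#h) w * \<psi> (length h)"
    using assms(3) eR by (intro mult_left_mono) auto
  have split: "(\<Sum>t\<in>{length h..<length h + dt_depth (Node i L R)}. \<psi> t) = \<psi> (length h) + ?S"
  proof -
    have "{length h..<length h + dt_depth (Node i L R)} = insert (length h) {Suc (length h)..<Suc (length h) + ?m}"
      by auto
    then show ?thesis by simp
  qed
  have "PSE (Node i L R) h w \<phi> \<le> (E L ((i,-1)#h) w * \<psi> (length h) + E L ((i,-1)#h) w * ?S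
        + E R ((i,1)#h) w * \<psi> (length h) + E R ((i,1)#h) w * ?S) / 2"
    using pL pR fL fR by simp
  also have "\<dots> = E (Node i L R) h w * (\<psi> (length h) + ?S)" by (simp add: field_simps)
  finally show ?case unfolding split .
qed

fun LVL :: "dtree \<Rightarrow> hist \<Rightarrow> nat \<Rightarrow> (hist \<Rightarrow> bool \<Rightarrow> real) \<Rightarrow> (hist \<Rightarrow> nat \<Rightarrow> real) \<Rightarrow> real" where
  "LVL (Leaf b) h t w c = 0"
| "LVL (Node i L R) h 0 w c = E (Node i L R) h w * c h i"
| "LVL (Node i L R) h (Suc t) w c = (LVL L ((i,-1)#h) t w c + LVL R ((i,1)#h) t w c) / 2"

lemma LVL_beyond: "dt_depth T \<le> t \<Longrightarrow> LVL T h t w c = 0"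
proof (induction T arbitrary: h t)
  case (Leaf b) then show ?case by simp
next
  case (Node i L R)
  then obtain t' where "t = Suc t'" by (cases t) auto
  then show ?case using Node by simp
qed

lemma PSE_LVL: "PSE T h w (\<lambda>h i b. c h i) = (\<Sum>t<dt_depth T. LVL T h t w c)"
proof (induction T arbitrary: h)
  case (Leaf b) then show ?case by simp
next
  case (Node i L R)
  let ?m = "max (dt_depth L) (dt_depth R)"
  have sL: "(\<Sum>t<?m. LVL L ((i,-1)#h) t w c) = (\<Sum>t<dt_depth L. LVL L ((i,-1)#h) t w c)"
    by (rule sum.mono_neutral_right) (auto simp: LVL_beyond)
  have sR: "(\<Sum>t<?m. LVL R ((i,1)#h) t w c) = (\<Sum>t<dt_depth R. LVL R ((i,1)#h) t w c)"
    by (rule sum.mono_neutral_right) (auto simp: LVL_beyond)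
  have d: "dt_depth (Node i L R) = Suc ?m" by simp
  have "(\<Sum>t<dt_depth (Node i L R). LVL (Node i L R) h t w c)
      = LVL (Node i L R) h 0 w c + (\<Sum>t<?m. LVL (Node i L R) h (Suc t) w c)"
    unfolding d by (rule sum.lessThan_Suc_shift)
  also have "\<dots> = E (Node i L R) h w * c h i + ((\<Sum>t<?m. LVL L ((i,-1)#h) t w c) + (\<Sum>t<?m. LVL R ((i,1)#h) t w c)) / 2"
    by (simp add: sum.distrib flip: sum_divide_distrib)
  finally show ?case using Node.IH[of "(i,-1)#h"] Node.IH[of "(i,1)#h"] sL sR
    by (simp add: field_simps)
qed

lemma LVL_cong:
  assumes "\<And>ext i. length ext = t \<Longrightarrow> i \<in> dt_vars T \<Longrightarrow> c (ext @ h) i = c' (ext @ h) i"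
  shows "LVL T h t w c = LVL T h t w c'"
  using assms
proof (induction T arbitrary: h t)
  case (Leaf b) then show ?case by simp
next
  case (Node i L R)
  show ?case
  proof (cases t)
    case 0
    then show ?thesis using Node.prems[of "[]" i] by simp
  next
    case (Suc t')
    have "LVL L ((i,-1)#h) t' w c = LVL L ((i,-1)#h) t' w c'"
    proof (rule Node.IH(1))
      fix ext :: hist and j assume "length ext = t'" "j \<in> dt_vars L"
      then show "c (ext @ (i,-1)#h) j = c' (ext @ (i,-1)#h) j"
        using Node.prems[of "ext @ [(i,-1)]" j] Suc by simp
    qed
    moreover have "LVL R ((i,1)#h) t' w c = LVL R ((i,1)#h) t' w c'"
    proof (rule Node.IH(2))
      fix ext :: hist and j assume "length ext = t'" "j \<in> dt_vars R"
      then show "c (ext @ (i,1)#h) j = c' (ext @ (i,1)#h) j"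
        using Node.prems[of "ext @ [(i,1)]" j] Suc by simp
    qed
    ultimately show ?thesis using Suc by simp
  qed
qed

lemma LVL_sum: "finite J \<Longrightarrow> LVL T h t w (\<lambda>h i. \<Sum>j\<in>J. c j h i) = (\<Sum>j\<in>J. LVL T h t w (c j))"
proof (induction T arbitrary: h t)
  case (Leaf b) then show ?case by simp
next
  case (Node i L R)
  then show ?case
    by (cases t) (simp_all add: sum_distrib_left sum.distrib flip: sum_divide_distrib)
qed

fun trunc :: "dtree \<Rightarrow> nat \<Rightarrow> dtree" where
  "trunc (Leaf b) t = Leaf b"
| "trunc (Node i L R) 0 = Leaf False"
| "trunc (Node i L R) (Suc t) = Node i (trunc L t) (trunc R t)"

fun follow :: "dtree \<Rightarrow> hist \<Rightarrow> dtree" where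
  "follow T [] = T"
| "follow (Leaf b) (p#r) = Leaf b"
| "follow (Node i L R) (p#r) = follow (if snd p = -1 then L else R) r"

definition wLV :: "dtree \<Rightarrow> hist \<Rightarrow> (hist \<Rightarrow> bool \<Rightarrow> real) \<Rightarrow> (hist \<Rightarrow> nat \<Rightarrow> real) \<Rightarrow> hist \<Rightarrow> real" where
  "wLV T h w c h' = (case follow T (rev (take (length h' - length h) h')) of
      Leaf _ \<Rightarrow> 0 | Node i L R \<Rightarrow> E (Node i L R) h' w * c h' i)"

lemma LVL_trunc: "LVL T h t w c = E (trunc T t) h (\<lambda>h' _. wLV T h w c h')"
proof (induction T arbitrary: h t)
  case (Leaf b) then show ?case by (simp add: wLV_def)
next
  case (Node i L R)
  show ?case
  proof (cases t)
    case 0 then show ?thesis by (simp add: wLV_def)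
  next
    case (Suc t')
    have "E (trunc L t') ((i,-1)#h) (\<lambda>h' _. wLV L ((i,-1)#h) w c h')
        = E (trunc L t') ((i,-1)#h) (\<lambda>h' _. wLV (Node i L R) h w c h')"
      by (rule E_cong2) (simp add: wLV_def)
    moreover have "E (trunc R t') ((i,1)#h) (\<lambda>h' _. wLV R ((i,1)#h) w c h')
        = E (trunc R t') ((i,1)#h) (\<lambda>h' _. wLV (Node i L R) h w c h')"
      by (rule E_cong2) (simp add: wLV_def)
    ultimately show ?thesis using Suc Node.IH by simp
  qed
qed

lemma trunc_vars: "dt_vars (trunc T t) \<subseteq> dt_vars T"
  by (induction T t rule: trunc.induct) auto

lemma trunc_good: "good T \<Longrightarrow> good (trunc T t)"
  by (induction T t rule: trunc.induct) (use trunc_vars in fastforce)+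

lemma trunc_depth: "dt_depth (trunc T t) \<le> t"
  by (induction T t rule: trunc.induct) auto

lemma wLV_range:
  assumes "\<And>h b. 0 \<le> w h b" "\<And>h b. w h b \<le> 1" "\<And>h i. 0 \<le> c h i" "\<And>h i. c h i \<le> 1"
  shows "0 \<le> wLV T h w c h'" "wLV T h w c h' \<le> 1"
proof -
  have "0 \<le> wLV T h w c h' \<and> wLV T h w c h' \<le> 1"
  proof (cases "follow T (rev (take (length h' - length h) h'))")
    case (Leaf b) then show ?thesis by (simp add: wLV_def)
  next
    case (Node i L R)
    let ?e = "E (Node i L R) h' w"
    have e0: "0 \<le> ?e" by (rule E_nonneg) (rule assms(1))
    have e1: "?e \<le> 1" by (rule E_le1) (rule assms(2))
    have c0: "0 \<le> c h' i" and c1: "c h' i \<le> 1" using assms(3,4) by auto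
    have "0 \<le> ?e * c h' i" using e0 c0 by (rule mult_nonneg_nonneg)
    moreover have "?e * c h' i \<le> 1" using mult_le_one[OF e1 c0 c1] .
    ultimately have "0 \<le> ?e * c h' i" "?e * c h' i \<le> 1" by auto
    then show ?thesis using Node by (simp add: wLV_def)
  qed
  then show "0 \<le> wLV T h w c h'" "wLV T h w c h' \<le> 1" by auto
qed

definition NN :: "nat \<Rightarrow> real" where "NN n = 2 * real n ^ 3"

definition Lam :: "nat \<Rightarrow> nat \<Rightarrow> real \<Rightarrow> real" where
  "Lam n i p = ln (4 * NN n ^ i / p)"

definition beta :: "nat \<Rightarrow> nat \<Rightarrow> nat \<Rightarrow> real \<Rightarrow> real" where
  "beta n k D p = sqrt (9 ^ k * real (D choose k) * (\<Prod>i<k. Lam n i p))"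

lemma ln4_ge1: "1 \<le> ln (4::real)"
proof -
  have "exp 1 \<le> (4::real)" using exp_le by simp
  then show ?thesis by (subst ln_ge_iff) auto
qed

lemma NN_ge2: "1 \<le> n \<Longrightarrow> 2 \<le> NN n"
proof -
  assume "1 \<le> n"
  then have "1 \<le> real n ^ 3" by simp
  then show ?thesis by (simp add: NN_def)
qed

lemma Lam_ge1:
  assumes "1 \<le> n" "0 < p" "p \<le> 1"
  shows "1 \<le> Lam n i p"
proof -
  have "1 \<le> NN n ^ i" using NN_ge2[OF assms(1)] by (simp add: one_le_power)
  then have "4 \<le> 4 * NN n ^ i / p" using assms(2,3)
    by (simp add: le_divide_eq)
  then have "ln 4 \<le> Lam n i p" unfolding Lam_def by (subst ln_le_cancel_iff) auto
  then show ?thesis using ln4_ge1 by simp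
qed

lemma prod_Lam_nonneg: "1 \<le> n \<Longrightarrow> 0 < p \<Longrightarrow> p \<le> 1 \<Longrightarrow> 0 \<le> (\<Prod>i<k. Lam n i p)"
  using Lam_ge1 by (intro prod_nonneg) (meson dual_order.trans zero_le_one)

lemma beta_sq:
  assumes "1 \<le> n" "0 < p" "p \<le> 1"
  shows "(beta n k D p)\<^sup>2 = 9 ^ k * real (D choose k) * (\<Prod>i<k. Lam n i p)"
  unfolding beta_def using prod_Lam_nonneg[OF assms, of k] by (intro real_sqrt_pow2) simp

lemma beta_nonneg:
  assumes "1 \<le> n" "0 < p" "p \<le> 1"
  shows "0 \<le> beta n k D p"
  unfolding beta_def using prod_Lam_nonneg[OF assms, of k] by simp

lemma Lam_shift:
  assumes "1 \<le> n" "0 < P"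
  shows "Lam n i (P / NN n) = Lam n (Suc i) P"
proof -
  have "NN n > 0" using NN_ge2[OF assms(1)] by simp
  then have "4 * NN n ^ i / (P / NN n) = 4 * NN n ^ Suc i / P" by (simp add: field_simps)
  then show ?thesis by (simp add: Lam_def mult_ac)
qed

lemma sum_choose_lt: "(\<Sum>t<D. t choose k) = D choose Suc k"
proof (cases D)
  case 0 then show ?thesis by simp
next
  case (Suc m)
  then have "{..<D} = {..m}" by auto
  then show ?thesis using sum_choose_upper[where n=m and m=k] Suc by simp
qed

lemma LS:
  assumes "1 \<le> n" "0 < P" "P \<le> 1"
  shows "Lam n 0 P * (\<Sum>t<D. (beta n k t (P / NN n))\<^sup>2) = (beta n (Suc k) D P)\<^sup>2 / 9"
proof -
  have N: "2 \<le> NN n" using NN_ge2[OF assms(1)] .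
  have Q: "0 < P / NN n" "P / NN n \<le> 1" using N assms by (auto simp: divide_le_eq)
  have pr: "(\<Prod>i<k. Lam n i (P / NN n)) = (\<Prod>i<k. Lam n (Suc i) P)"
    using Lam_shift[OF assms(1,2)] by simp
  have "(\<Sum>t<D. (beta n k t (P / NN n))\<^sup>2) = (\<Sum>t<D. 9 ^ k * real (t choose k) * (\<Prod>i<k. Lam n (Suc i) P))"
    using beta_sq[OF assms(1) Q] pr by simp
  also have "\<dots> = 9 ^ k * (\<Prod>i<k. Lam n (Suc i) P) * real (\<Sum>t<D. t choose k)"
    by (simp add: sum_distrib_left sum_distrib_right mult_ac)
  also have "\<dots> = 9 ^ k * (\<Prod>i<k. Lam n (Suc i) P) * real (D choose Suc k)"
    by (simp add: sum_choose_lt)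
  finally have s: "(\<Sum>t<D. (beta n k t (P / NN n))\<^sup>2) = 9 ^ k * (\<Prod>i<k. Lam n (Suc i) P) * real (D choose Suc k)" .
  have "(beta n (Suc k) D P)\<^sup>2 = 9 ^ Suc k * real (D choose Suc k) * (Lam n 0 P * (\<Prod>i<k. Lam n (Suc i) P))"
    using beta_sq[OF assms, of "Suc k" D] unfolding prod.lessThan_Suc_shift .
  then show ?thesis using s by (simp add: field_simps)
qed

lemma Mt_le:
  assumes "1 \<le> n" "0 < P" "P \<le> 1" "t < D"
  shows "(beta n k t (P / NN n))\<^sup>2 \<le> (beta n (Suc k) D P)\<^sup>2 / 9"
proof -
  have N: "2 \<le> NN n" using NN_ge2[OF assms(1)] .
  have Q: "0 < P / NN n" "P / NN n \<le> 1" using N assms by (auto simp: divide_le_eq)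
  have pr: "(\<Prod>i<k. Lam n i (P / NN n)) = (\<Prod>i<k. Lam n (Suc i) P)"
    using Lam_shift[OF assms(1,2)] by simp
  have p0: "0 \<le> (\<Prod>i<k. Lam n (Suc i) P)"
    using Lam_ge1[OF assms(1-3)] by (intro prod_nonneg) (meson dual_order.trans zero_le_one)
  have c: "t choose k \<le> D choose Suc k"
  proof -
    have "t choose k \<le> Suc t choose Suc k" by simp
    also have "\<dots> \<le> D choose Suc k" using assms(4) by (intro binomial_right_mono) simp
    finally show ?thesis .
  qed
  have "(beta n k t (P / NN n))\<^sup>2 = 9 ^ k * real (t choose k) * (\<Prod>i<k. Lam n (Suc i) P)"
    using beta_sq[OF assms(1) Q] pr by simp
  also have "\<dots> \<le> 9 ^ k * real (D choose Suc k) * (\<Prod>i<k. Lam n (Suc i) P)"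
    using c p0 by (intro mult_right_mono mult_left_mono) auto
  also have "\<dots> \<le> 9 ^ k * real (D choose Suc k) * (Lam n 0 P * (\<Prod>i<k. Lam n (Suc i) P))"
    using Lam_ge1[OF assms(1-3), of 0] p0
    by (intro mult_left_mono) (auto simp: mult_le_cancel_right1)
  also have "\<dots> = (beta n (Suc k) D P)\<^sup>2 / 9"
    using beta_sq[OF assms(1-3), of "Suc k" D] unfolding prod.lessThan_Suc_shift by simp
  finally show ?thesis .
qed

lemma beta_strict:
  assumes "1 \<le> n" "1 \<le> k" "0 < Q" "Q < q" "q \<le> 1" "0 < D choose k"
  shows "beta n k D q < beta n k D Q"
proof -
  have Q1: "Q \<le> 1" using assms by simp
  have lt: "Lam n i q < Lam n i Q" for i
  proof -
    have "NN n ^ i > 0" using NN_ge2[OF assms(1)] by simp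
    then have "4 * NN n ^ i / q < 4 * NN n ^ i / Q" using assms(3,4) by (intro divide_strict_left_mono) auto
    then show ?thesis unfolding Lam_def using assms \<open>NN n ^ i > 0\<close> by (subst ln_less_cancel_iff) auto
  qed
  have "(\<Prod>i<k. Lam n i q) < (\<Prod>i<k. Lam n i Q)"
  proof (rule prod_mono_strict[of 0])
    show "0 \<in> {..<k}" using assms(2) by simp
    show "Lam n 0 q < Lam n 0 Q" by (rule lt)
    show "finite {..<k}" by simp
    fix i assume "i \<in> {..<k}"
    show "0 \<le> Lam n i q \<and> Lam n i q \<le> Lam n i Q"
      using Lam_ge1[OF assms(1), of q i] lt[of i] assms by auto
    show "0 < Lam n i Q" using Lam_ge1[OF assms(1) assms(3) Q1, of i] by simp
  qed
  then have "9 ^ k * real (D choose k) * (\<Prod>i<k. Lam n i q) < 9 ^ k * real (D choose k) * (\<Prod>i<k. Lam n i Q)"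
    using assms(6) by simp
  then show ?thesis unfolding beta_def by (subst real_sqrt_less_iff) 
qed

lemma harm_bound: "1 \<le> k \<Longrightarrow> (\<Sum>i<k. 1 / (real i + 1)) \<le> 1 + ln (real k)"
proof (induction k rule: dec_induct)
  case base then show ?case by simp
next
  case (step m)
  have "ln (real m / (real m + 1)) \<le> real m / (real m + 1) - 1"
    using step.hyps by (intro ln_le_minus_one) auto
  also have "\<dots> = - 1 / (real m + 1)" by (simp add: field_simps)
  finally have "1 / (real m + 1) \<le> ln (real m + 1) - ln (real m)"
    using step.hyps by (simp add: ln_div)
  moreover have A: "(\<Sum>i<Suc m. 1/(real i + 1)) = (\<Sum>i<m. 1/(real i+1)) + 1/(real m + 1)" by simp
  moreover have B: "ln (real (Suc m)) = ln (real m + 1)" by (simp add: add.commute)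
  ultimately show ?case using step.IH by linarith
qed

lemma mono_q:
  assumes n: "1 \<le> n" and k: "k < n" and q: "0 < q" "q \<le> Q" and Q: "Q \<le> 1 / NN n"
  shows "q * beta n k t q \<le> Q * beta n k t Q"
proof -
  have N: "2 \<le> NN n" using NN_ge2[OF n] .
  have lnN: "0 < ln (NN n)" using N by simp
  have Qp: "0 < Q" using q by simp
  have Q1: "Q \<le> 1" using Q N by (smt (verit) divide_le_eq_1)
  have q1: "q \<le> 1" using q Q1 by simp
  define r where "r = Q / q"
  define x where "x = ln r"
  have r1: "1 \<le> r" using q by (simp add: r_def)
  have x0: "0 \<le> x" using r1 by (simp add: x_def)
  have a_low: "real (Suc i) * ln (NN n) \<le> Lam n i Q" for i
  proof -
    have "NN n * Q \<le> 1" using Q N by (simp add: le_divide_eq mult.commute)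
    then have "NN n ^ Suc i \<le> 4 * NN n ^ i / Q" using Qp N
      by (simp add: le_divide_eq)
    then have "ln (NN n ^ Suc i) \<le> Lam n i Q" unfolding Lam_def using N Qp
      by (subst ln_le_cancel_iff) auto
    moreover have "ln (NN n ^ Suc i) = real (Suc i) * ln (NN n)" using N by (intro ln_realpow)
    ultimately show ?thesis by linarith
  qed
  have a_pos: "0 < Lam n i Q" for i
    using a_low[of i] lnN by (smt (verit) of_nat_0_less_iff zero_less_Suc mult_pos_pos)
  have lq: "Lam n i q = Lam n i Q + x" for i
  proof -
    have "NN n ^ i > 0" using N by simp
    then have e: "4 * NN n ^ i / q = (4 * NN n ^ i / Q) * r" using q Qp by (simp add: r_def field_simps)
    have "ln ((4 * NN n ^ i / Q) * r) = ln (4 * NN n ^ i / Q) + ln r"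
      using \<open>NN n ^ i > 0\<close> Qp r1 by (intro ln_mult_pos) auto
    then show ?thesis unfolding Lam_def x_def e .
  qed
  have step: "Lam n i q \<le> Lam n i Q * exp (x / Lam n i Q)" for i
  proof -
    have "1 + x / Lam n i Q \<le> exp (x / Lam n i Q)" by simp
    then have "Lam n i Q * (1 + x / Lam n i Q) \<le> Lam n i Q * exp (x / Lam n i Q)"
      using a_pos[of i] by (intro mult_left_mono) auto
    moreover have "Lam n i Q * (1 + x / Lam n i Q) = Lam n i Q + x" using a_pos[of i] by (simp add: field_simps)
    ultimately show ?thesis using lq[of i] by linarith
  qed
  have "(\<Prod>i<k. Lam n i q) \<le> (\<Prod>i<k. Lam n i Q * exp (x / Lam n i Q))"
    using step Lam_ge1[OF n q(1) q1] by (intro prod_mono) (meson dual_order.trans zero_le_one)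
  also have "\<dots> = (\<Prod>i<k. Lam n i Q) * exp (\<Sum>i<k. x / Lam n i Q)"
    by (simp add: prod.distrib exp_sum)
  also have "exp (\<Sum>i<k. x / Lam n i Q) \<le> r\<^sup>2"
  proof -
    have "(\<Sum>i<k. x / Lam n i Q) \<le> (\<Sum>i<k. x / ln (NN n) * (1 / (real i + 1)))"
    proof (rule sum_mono)
      fix i assume "i \<in> {..<k}"
      have "x / Lam n i Q \<le> x / (real (Suc i) * ln (NN n))"
        using a_low[of i] x0 lnN a_pos[of i] by (intro divide_left_mono) (auto intro!: mult_pos_pos)
      then show "x / Lam n i Q \<le> x / ln (NN n) * (1 / (real i + 1))" by (simp add: field_simps)
    qed
    also have "\<dots> = x / ln (NN n) * (\<Sum>i<k. 1 / (real i + 1))" by (simp add: sum_distrib_left)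
    also have "\<dots> \<le> x / ln (NN n) * (2 * ln (NN n))"
    proof (cases "k = 0")
      case True then show ?thesis using x0 lnN by simp
    next
      case False
      have "(\<Sum>i<k. 1 / (real i + 1)) \<le> 1 + ln (real k)" using False by (intro harm_bound) simp
      also have "\<dots> \<le> 2 * ln (NN n)"
      proof -
        have "ln (real k) \<le> ln (real n)" using False k by simp
        have "0 \<le> ln (real n)" using n by simp
        have "ln (NN n) = ln 2 + 3 * ln (real n)" using n by (simp add: NN_def ln_mult ln_realpow)
        moreover have "1 \<le> 2 * ln (2::real)"
        proof -
          have "ln ((2::real) ^ 2) = real 2 * ln 2" by (intro ln_realpow)
          then have "ln (4::real) = 2 * ln 2" by simp
          then show ?thesis using ln4_ge1 by simp
        qed
        ultimately show ?thesis using \<open>ln (real k) \<le> ln (real n)\<close> \<open>0 \<le> ln (real n)\<close> by linarith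
      qed
      finally show ?thesis using x0 lnN by (intro mult_left_mono) auto
    qed
    also have "\<dots> = 2 * x" using lnN by simp
    finally have "exp (\<Sum>i<k. x / Lam n i Q) \<le> exp (2 * x)" by simp
    also have "exp (2 * x) = r\<^sup>2"
    proof -
      have "exp (2 * x) = exp (x + x)" by simp
      also have "\<dots> = exp x * exp x" by (rule exp_add)
      also have "exp x = r" using r1 by (simp add: x_def)
      finally show ?thesis by (simp add: power2_eq_square)
    qed
    finally show ?thesis .
  qed
  finally have P: "(\<Prod>i<k. Lam n i q) \<le> (\<Prod>i<k. Lam n i Q) * r\<^sup>2"
    using prod_Lam_nonneg[OF n Qp Q1, of k] by (smt (verit) mult_left_mono)
  have "q\<^sup>2 * (\<Prod>i<k. Lam n i q) \<le> q\<^sup>2 * ((\<Prod>i<k. Lam n i Q) * r\<^sup>2)"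
    using P by (intro mult_left_mono) auto
  also have "\<dots> = Q\<^sup>2 * (\<Prod>i<k. Lam n i Q)" using q by (simp add: r_def power2_eq_square field_simps)
  finally have key: "q\<^sup>2 * (\<Prod>i<k. Lam n i q) \<le> Q\<^sup>2 * (\<Prod>i<k. Lam n i Q)" .
  have "q * beta n k t q = sqrt (q\<^sup>2 * (9 ^ k * real (t choose k) * (\<Prod>i<k. Lam n i q)))"
    using q by (simp add: beta_def real_sqrt_mult)
  also have "\<dots> \<le> sqrt (Q\<^sup>2 * (9 ^ k * real (t choose k) * (\<Prod>i<k. Lam n i Q)))"
  proof (subst real_sqrt_le_iff)
    have "q\<^sup>2 * (\<Prod>i<k. Lam n i q) * (9 ^ k * real (t choose k)) \<le> Q\<^sup>2 * (\<Prod>i<k. Lam n i Q) * (9 ^ k * real (t choose k))"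
      using key by (intro mult_right_mono) auto
    then show "q\<^sup>2 * (9 ^ k * real (t choose k) * (\<Prod>i<k. Lam n i q)) \<le> Q\<^sup>2 * (9 ^ k * real (t choose k) * (\<Prod>i<k. Lam n i Q))"
      by (simp add: mult_ac)
  qed
  also have "\<dots> = Q * beta n k t Q" using Qp by (simp add: beta_def real_sqrt_mult)
  finally show ?thesis .
qed

lemma opt:
  fixes x A B :: real
  assumes "0 < A" "0 \<le> B" "\<And>lam. 0 < lam \<Longrightarrow> x \<le> A / lam + lam * B"
  shows "x \<le> 2 * sqrt (A * B)"
proof (cases "B = 0")
  case True
  show ?thesis
  proof (rule ccontr)
    assume "\<not> ?thesis"
    then have xp: "0 < x" using True by simp
    have "x \<le> A / (2 * A / x)" using assms(3)[of "2 * A / x"] xp assms(1) True by simp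
    also have "\<dots> = x / 2" using assms(1) xp by simp
    finally show False using xp by simp
  qed
next
  case False
  then have Bp: "0 < B" using assms(2) by simp
  let ?l = "sqrt (A / B)"
  have lp: "0 < ?l" using assms(1) Bp by simp
  have "x \<le> A / ?l + ?l * B" by (rule assms(3)[OF lp])
  also have "A / ?l = sqrt (A * B)"
    using assms(1) Bp by (simp add: real_sqrt_divide field_simps real_sqrt_mult)
  also have "?l * B = sqrt (A * B)"
    using assms(1) Bp by (simp add: real_sqrt_divide field_simps real_sqrt_mult)
  finally show ?thesis by simp
qed

lemma LVL_zero: "LVL T h t w (\<lambda>h i. 0) = 0"
proof (induction T arbitrary: h t)
  case (Leaf b) then show ?case by simp
next
  case (Node i L R) then show ?case by (cases t) auto
qed

lemma piece_abs:
  assumes n: "1 \<le> n" and k: "1 \<le> k" "k < n" and q: "0 \<le> q" "q \<le> 1"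
    and Q: "0 < Q" "Q \<le> 1 / NN n" and M: "M = beta n k t Q"
    and lo: "M * q \<le> x" and hi: "x \<le> q * beta n k t q"
  shows "x \<le> Q * M"
proof -
  have N: "2 \<le> NN n" using NN_ge2[OF n] .
  have Q1: "Q \<le> 1" using Q N by (smt (verit) divide_le_eq_1)
  have M0: "0 \<le> M" using beta_nonneg[OF n Q(1) Q1] M by simp
  have QM: "0 \<le> Q * M" using M0 Q by simp
  show ?thesis
  proof (cases "q = 0")
    case True
    then show ?thesis using hi QM by simp
  next
    case False
    then have qp: "0 < q" using q by simp
    show ?thesis
    proof (cases "t choose k = 0")
      case True
      then have "beta n k t q = 0" by (simp add: beta_def)
      then show ?thesis using hi QM by simp
    next
      case False
      then have c: "0 < t choose k" by simp
      have "M * q \<le> beta n k t q * q" using lo hi by (simp add: mult.commute)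
      then have Mle: "M \<le> beta n k t q" using qp by simp
      have "q \<le> Q"
      proof (rule ccontr)
        assume "\<not> q \<le> Q"
        then have "Q < q" by simp
        then have "beta n k t q < beta n k t Q" by (intro beta_strict[OF n k(1) Q(1) _ q(2) c])
        then show False using Mle M by simp
      qed
      then have "q * beta n k t q \<le> Q * beta n k t Q" by (intro mono_q[OF n k(2) qp _ Q(2)])
      then show ?thesis using hi M by simp
    qed
  qed
qed

theorem Hk:
  assumes "k \<le> n" "good T" "dt_vars T \<subseteq> {..<n}" "dt_depth T \<le> D" "D \<le> n"
    "\<And>S. \<bar>s S\<bar> \<le> 1" "\<And>h b. 0 \<le> w h b" "\<And>h b. w h b \<le> 1"
  shows "E T [] (\<lambda>h b. w h b * Gh k s h) \<le> E T [] w * beta n k D (E T [] w)"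
  using assms
proof (induction k arbitrary: T D s w)
  case 0
  have e: "(\<lambda>h b. w h b * Gh 0 s h) = (\<lambda>h b. s {} * w h b)"
    by (rule ext)+ (simp add: Gh_0)
  have "s {} * E T [] w \<le> 1 * E T [] w"
    using 0 by (intro mult_right_mono E_nonneg) (auto simp: abs_le_iff)
  then show ?case unfolding e E_cmult by (simp add: beta_def)
next
  case (Suc k)
  define P where "P = E T [] w"
  have P0: "0 \<le> P" unfolding P_def using Suc.prems by (intro E_nonneg) auto
  have P1: "P \<le> 1" unfolding P_def using Suc.prems by (intro E_le1) auto
  have n1: "1 \<le> n" using Suc.prems by simp
  show ?case
  proof (cases "P = 0")
    case True
    have "E T [] (\<lambda>h b. w h b * Gh (Suc k) s h) = 0"
      using True Suc.prems unfolding P_def by (intro E_zero) auto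
    then show ?thesis using True unfolding P_def by simp
  next
    case False
    then have Pp: "0 < P" using P0 by simp
    define N where "N = NN n"
    have N2: "2 \<le> N" using NN_ge2[OF n1] by (simp add: N_def)
    define Q where "Q = P / N"
    have Qp: "0 < Q" using Pp N2 by (simp add: Q_def)
    have QN: "Q \<le> 1 / N" using P1 N2 by (simp add: Q_def divide_right_mono)
    have Q1: "Q \<le> 1" using QN N2 by (smt (verit) divide_le_eq_1)
    define M where "M = (\<lambda>t. beta n k t Q)"
    have M0: "0 \<le> M t" for t unfolding M_def by (rule beta_nonneg[OF n1 Qp Q1])
    define Hf where "Hf = (\<lambda>h i. Gh k (\<lambda>S. s (insert i S)) h)"
    define ind where "ind = (\<lambda>h i. if \<bar>Hf h i\<bar> \<le> M (length h) then 1 else (0::real))"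
    define \<beta> where "\<beta> = beta n (Suc k) D P"
    have \<beta>0: "0 \<le> \<beta>" unfolding \<beta>_def by (rule beta_nonneg[OF n1 Pp P1])
    have w0: "\<And>h b. 0 \<le> w h b" and w1: "\<And>h b. w h b \<le> 1" using Suc.prems by auto
    have gT: "good T" using Suc.prems by simp

    have lhs: "E T [] (\<lambda>h b. w h b * Gh (Suc k) s h) = PSE T [] w (\<lambda>h i b. real_of_int b * Hf h i)"
      using mart[OF gT, of "[]" w k s] by (simp add: Gh_Nil Hf_def)
    define T1 where "T1 = PSE T [] w (\<lambda>h i b. real_of_int b * (Hf h i * ind h i))"
    define T2 where "T2 = PSE T [] w (\<lambda>h i b. real_of_int b * (Hf h i * (1 - ind h i)))"
    have splitT: "PSE T [] w (\<lambda>h i b. real_of_int b * Hf h i) = T1 + T2"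
    proof -
      have "(\<lambda>h i b. real_of_int b * Hf h i) = (\<lambda>h i b. real_of_int b * (Hf h i * ind h i) + real_of_int b * (Hf h i * (1 - ind h i)))"
        by (simp add: fun_eq_iff algebra_simps)
      then show ?thesis unfolding T1_def T2_def by (simp add: PSE_add)
    qed

    define L where "L = Lam n 0 P"
    define S where "S = (\<Sum>t<D. (M t)\<^sup>2)"
    have Lge: "1 \<le> L" unfolding L_def by (rule Lam_ge1[OF n1 Pp P1])
    have S0: "0 \<le> S" unfolding S_def by (intro sum_nonneg) simp
    have LS: "L * S = \<beta>\<^sup>2 / 9"
      unfolding L_def S_def M_def Q_def N_def \<beta>_def by (rule LS[OF n1 Pp P1])
    have entr: "- P * ln P \<le> P * L"
    proof -
      have "L = ln 4 - ln P" using Pp by (simp add: L_def Lam_def ln_div)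
      then have "- ln P \<le> L" using ln4_ge1 by simp
      then show ?thesis using mult_left_mono[OF \<open>- ln P \<le> L\<close> P0] by simp
    qed
    have T1lam: "T1 \<le> (P * L) / lam + lam * (P * S)" if lam: "0 < lam" for lam
    proof -
      define a where "a = (\<lambda>h i. lam * (Hf h i * ind h i))"
      have g: "PSE T [] w (\<lambda>h i b. a h i * real_of_int b - (a h i)\<^sup>2) \<le> - P * ln P"
        unfolding P_def by (rule gibbs[OF w0 w1])
      have g2: "PSE T [] w (\<lambda>h i b. a h i * real_of_int b - (a h i)\<^sup>2) = lam * T1 - PSE T [] w (\<lambda>h i b. (a h i)\<^sup>2)"
      proof -
        have "PSE T [] w (\<lambda>h i b. a h i * real_of_int b - (a h i)\<^sup>2)
           = PSE T [] w (\<lambda>h i b. lam * (real_of_int b * (Hf h i * ind h i))) + PSE T [] w (\<lambda>h i b. (-1) * (a h i)\<^sup>2)"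
        proof -
          have ab: "a h i * real_of_int b = lam * (real_of_int b * (Hf h i * ind h i))" for h i b
            by (simp add: a_def mult_ac)
          have "(\<lambda>h i b. a h i * real_of_int b - (a h i)\<^sup>2)
              = (\<lambda>h i b. lam * (real_of_int b * (Hf h i * ind h i)) + (-1) * (a h i)\<^sup>2)"
            by (intro ext) (simp add: ab)
          then show ?thesis by (simp only: PSE_add)
        qed
        also have "\<dots> = lam * T1 + (-1) * PSE T [] w (\<lambda>h i b. (a h i)\<^sup>2)"
          unfolding PSE_cmult T1_def ..
        finally show ?thesis by simp
      qed
      have bnd: "(a h i)\<^sup>2 \<le> lam\<^sup>2 * (M (length h))\<^sup>2" for h i
      proof -
        have "\<bar>Hf h i * ind h i\<bar> \<le> M (length h)" using M0 by (simp add: ind_def)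
        then have "(Hf h i * ind h i)\<^sup>2 \<le> (M (length h))\<^sup>2"
          by (metis abs_ge_zero power2_abs power_mono)
        then show ?thesis unfolding a_def using lam by (simp add: power_mult_distrib mult_left_mono)
      qed
      have "PSE T [] w (\<lambda>h i b. (a h i)\<^sup>2) \<le> E T [] w * (\<Sum>t\<in>{length ([]::hist)..<length ([]::hist) + dt_depth T}. lam\<^sup>2 * (M t)\<^sup>2)"
        by (rule PSE_depth[OF w0]) (auto simp: bnd)
      also have "(\<Sum>t\<in>{length ([]::hist)..<length ([]::hist) + dt_depth T}. lam\<^sup>2 * (M t)\<^sup>2) \<le> lam\<^sup>2 * S"
      proof -
        have "(\<Sum>t\<in>{0..<dt_depth T}. lam\<^sup>2 * (M t)\<^sup>2) \<le> (\<Sum>t\<in>{..<D}. lam\<^sup>2 * (M t)\<^sup>2)"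
          using Suc.prems(4) by (intro sum_mono2) auto
        then show ?thesis by (simp add: S_def sum_distrib_left)
      qed
      finally have q2: "PSE T [] w (\<lambda>h i b. (a h i)\<^sup>2) \<le> P * (lam\<^sup>2 * S)"
        using P0 unfolding P_def by (simp add: mult_left_mono)
      have "lam * T1 \<le> P * L + P * (lam\<^sup>2 * S)" using g g2 q2 entr by linarith
      then have "T1 \<le> (P * L + P * (lam\<^sup>2 * S)) / lam" using lam by (simp add: le_divide_eq mult.commute)
      also have "\<dots> = (P * L) / lam + lam * (P * S)" using lam by (simp add: field_simps power2_eq_square)
      finally show ?thesis .
    qed
    have T1b: "T1 \<le> 2 * P * \<beta> / 3"
    proof -
      have "T1 \<le> 2 * sqrt ((P * L) * (P * S))"
        by (rule opt[OF _ _ T1lam]) (use Pp Lge S0 in auto)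
      also have "sqrt ((P * L) * (P * S)) = P * sqrt (L * S)"
        using P0 by (simp add: real_sqrt_mult mult_ac)
      also have "sqrt (L * S) = \<beta> / 3"
        unfolding LS using \<beta>0 by (simp add: real_sqrt_divide)
      finally show ?thesis by simp
    qed

    have Mt: "M t \<le> \<beta> / 3" if "t < D" for t
    proof -
      have "(M t)\<^sup>2 \<le> \<beta>\<^sup>2 / 9"
        unfolding M_def Q_def N_def \<beta>_def by (rule Mt_le[OF n1 Pp P1 that])
      moreover have e: "\<beta>\<^sup>2 / 9 = (\<beta> / 3)\<^sup>2" by (simp add: power2_eq_square)
      ultimately have "(M t)\<^sup>2 \<le> (\<beta> / 3)\<^sup>2" by linarith
      moreover have "0 \<le> \<beta> / 3" using \<beta>0 by simp
      ultimately show ?thesis by (rule power2_le_imp_le)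
    qed
    have lvl: "LVL T [] t w (\<lambda>h i. \<bar>Hf h i\<bar> * (1 - ind h i)) \<le> 2 * real n * Q * M t"
      if t: "t < dt_depth T" for t
    proof -
      define c where "c = (\<lambda>j (\<sigma>::real) h i. if j = i then (if \<sigma> * Hf h j > M t then \<sigma> * Hf h j else 0) else (0::real))"
      have "LVL T [] t w (\<lambda>h i. \<bar>Hf h i\<bar> * (1 - ind h i)) = LVL T [] t w (\<lambda>h i. \<Sum>j<n. \<Sum>\<sigma>\<in>{-1,1}. c j \<sigma> h i)"
      proof (rule LVL_cong)
        fix ext :: hist and i assume e: "length ext = t" "i \<in> dt_vars T"
        then have i: "i < n" using Suc.prems(3) by auto
        have "(\<Sum>j<n. \<Sum>\<sigma>\<in>{-1,1}. c j \<sigma> (ext @ []) i) = (\<Sum>j<n. if j = i then (\<Sum>\<sigma>\<in>{-1,1::real}. (if \<sigma> * Hf (ext @ []) j > M t then \<sigma> * Hf (ext @ []) j else 0)) else 0)"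
          by (rule sum.cong) (auto simp: c_def)
        also have "\<dots> = (\<Sum>\<sigma>\<in>{-1,1::real}. (if \<sigma> * Hf (ext @ []) i > M t then \<sigma> * Hf (ext @ []) i else 0))"
          using i by (simp add: sum.delta')
        also have "\<dots> = \<bar>Hf (ext @ []) i\<bar> * (1 - ind (ext @ []) i)"
          using M0[of t] e(1) by (auto simp: ind_def)
        finally show "\<bar>Hf (ext @ []) i\<bar> * (1 - ind (ext @ []) i) = (\<Sum>j<n. \<Sum>\<sigma>\<in>{-1,1}. c j \<sigma> (ext @ []) i)" by simp
      qed
      also have "\<dots> = (\<Sum>j<n. LVL T [] t w (\<lambda>h i. \<Sum>\<sigma>\<in>{-1,1}. c j \<sigma> h i))"
        by (rule LVL_sum) simp
      also have "\<dots> = (\<Sum>j<n. \<Sum>\<sigma>\<in>{-1,1}. LVL T [] t w (c j \<sigma>))"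
        by (rule sum.cong[OF refl]) (rule LVL_sum, simp)
      also have "\<dots> \<le> (\<Sum>j<n. \<Sum>\<sigma>\<in>{-1,1::real}. Q * M t)"
      proof (intro sum_mono)
        fix j \<sigma> assume j: "j \<in> {..<n}" and \<sigma>: "\<sigma> \<in> {-1, 1::real}"
        have sabs: "\<bar>\<sigma>\<bar> = 1" using \<sigma> by auto
        show "LVL T [] t w (c j \<sigma>) \<le> Q * M t"
        proof (cases k)
          case 0
          have "c j \<sigma> = (\<lambda>h i. 0)"
          proof (intro ext)
            fix h i
            have "\<bar>\<sigma> * Hf h j\<bar> \<le> 1" using Suc.prems(6)[of "{j}"] sabs 0
              by (simp add: Hf_def Gh_0 abs_mult)
            moreover have "M t = 1" using 0 by (simp add: M_def beta_def)
            ultimately show "c j \<sigma> h i = 0" by (auto simp: c_def)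
          qed
          then show ?thesis using Qp M0[of t] by (simp add: LVL_zero)
        next
          case (Suc k')
          then have k1: "1 \<le> k" by simp
          define c0 where "c0 = (\<lambda>h i. if i = j \<and> \<sigma> * Hf h j > M t then 1 else (0::real))"
          define \<omega> where "\<omega> = (\<lambda>h' (b::bool). wLV T [] w c0 h')"
          define s' where "s' = (\<lambda>S. \<sigma> * s (insert j S))"
          have c0r: "0 \<le> c0 h i" "c0 h i \<le> 1" for h i by (auto simp: c0_def)
          have \<omega>0: "0 \<le> \<omega> h b" and \<omega>1: "\<omega> h b \<le> 1" for h b
            unfolding \<omega>_def using wLV_range[OF w0 w1 c0r] by auto
          have Gs: "Gh k s' h = \<sigma> * Hf h j" for h
            unfolding s'_def Hf_def by (rule Gh_cmult)
          have eqp: "LVL T [] t w (c j \<sigma>) = E (trunc T t) [] (\<lambda>h b. \<omega> h b * Gh k s' h)"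
          proof -
            have "LVL T [] t w (c j \<sigma>) = E (trunc T t) [] (\<lambda>h' _. wLV T [] w (c j \<sigma>) h')"
              by (rule LVL_trunc)
            also have "\<dots> = E (trunc T t) [] (\<lambda>h b. \<omega> h b * Gh k s' h)"
            proof (rule E_cong2)
              fix ext :: hist and b
              show "wLV T [] w (c j \<sigma>) (ext @ []) = \<omega> (ext @ []) b * Gh k s' (ext @ [])"
                unfolding \<omega>_def Gs
                by (auto simp: wLV_def c_def c0_def split: dtree.split)
            qed
            finally show ?thesis .
          qed
          define q where "q = E (trunc T t) [] \<omega>"
          have q0: "0 \<le> q" unfolding q_def using \<omega>0 by (intro E_nonneg) auto
          have q1: "q \<le> 1" unfolding q_def using \<omega>1 by (intro E_le1) auto
          have tn: "t \<le> n" using t Suc.prems(4,5) by simp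
          have IH: "E (trunc T t) [] (\<lambda>h b. \<omega> h b * Gh k s' h) \<le> q * beta n k t q"
            unfolding q_def
          proof (rule Suc.IH)
            show "k \<le> n" using Suc.prems(1) by simp
            show "good (trunc T t)" using trunc_good gT by blast
            show "dt_vars (trunc T t) \<subseteq> {..<n}" using trunc_vars Suc.prems(3) by blast
            show "dt_depth (trunc T t) \<le> t" by (rule trunc_depth)
            show "t \<le> n" by (rule tn)
            show "\<bar>s' S\<bar> \<le> 1" for S using Suc.prems(6)[of "insert j S"] sabs by (simp add: s'_def abs_mult)
            show "0 \<le> \<omega> h b" for h b by (rule \<omega>0)
            show "\<omega> h b \<le> 1" for h b by (rule \<omega>1)
          qed
          have lo: "M t * q \<le> E (trunc T t) [] (\<lambda>h b. \<omega> h b * Gh k s' h)"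
          proof -
            have "M t * q = E (trunc T t) [] (\<lambda>h b. M t * \<omega> h b)" unfolding q_def by (simp add: E_cmult)
            also have "\<dots> \<le> E (trunc T t) [] (\<lambda>h b. \<omega> h b * Gh k s' h)"
            proof (rule E_mono)
              fix h b
              show "M t * \<omega> h b \<le> \<omega> h b * Gh k s' h"
              proof (cases "follow T (rev (take (length h - length ([]::hist)) h))")
                case (Leaf x) then show ?thesis by (simp add: \<omega>_def wLV_def)
              next
                case (Node i L R)
                have e0: "0 \<le> E (Node i L R) h w" by (rule E_nonneg) (rule w0)
                show ?thesis
                proof (cases "i = j \<and> \<sigma> * Hf h j > M t")
                  case True
                  then have "E (Node i L R) h w * M t \<le> E (Node i L R) h w * (\<sigma> * Hf h j)"
                    using e0 by (intro mult_left_mono) auto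
                  then show ?thesis using Node True unfolding \<omega>_def wLV_def Gs c0_def
                    by (simp add: mult_ac)
                next
                  case False
                  then show ?thesis using Node unfolding \<omega>_def wLV_def Gs c0_def by auto
                qed
              qed
            qed
            finally show ?thesis .
          qed
          have "E (trunc T t) [] (\<lambda>h b. \<omega> h b * Gh k s' h) \<le> Q * M t"
            by (rule piece_abs[OF n1 k1 _ q0 q1 Qp _ _ lo IH])
               (use Suc.prems(1) QN in \<open>auto simp: M_def N_def\<close>)
          then show ?thesis using eqp by simp
        qed
      qed
      also have "\<dots> = 2 * real n * Q * M t" by simp
      finally show ?thesis .
    qed
    have T2b: "T2 \<le> P * \<beta> / 3"
    proof -
      have "T2 \<le> PSE T [] w (\<lambda>h i b. \<bar>Hf h i\<bar> * (1 - ind h i))"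
        unfolding T2_def
      proof (rule PSE_mono[OF w0])
        fix h i
        have x0: "0 \<le> 1 - ind h i" by (simp add: ind_def)
        have "- Hf h i * (1 - ind h i) \<le> \<bar>Hf h i\<bar> * (1 - ind h i)"
          by (rule mult_right_mono[OF _ x0]) simp
        then show "real_of_int (-1) * (Hf h i * (1 - ind h i)) \<le> \<bar>Hf h i\<bar> * (1 - ind h i)" by simp
        have "Hf h i * (1 - ind h i) \<le> \<bar>Hf h i\<bar> * (1 - ind h i)"
          by (rule mult_right_mono[OF _ x0]) simp
        then show "real_of_int 1 * (Hf h i * (1 - ind h i)) \<le> \<bar>Hf h i\<bar> * (1 - ind h i)" by simp
      qed
      also have "\<dots> = (\<Sum>t<dt_depth T. LVL T [] t w (\<lambda>h i. \<bar>Hf h i\<bar> * (1 - ind h i)))"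
        by (rule PSE_LVL)
      also have "\<dots> \<le> (\<Sum>t<dt_depth T. 2 * real n * Q * (\<beta> / 3))"
      proof (rule sum_mono)
        fix t assume t: "t \<in> {..<dt_depth T}"
        have tT: "t < dt_depth T" using t by simp
        then have "t < D" using Suc.prems(4) by auto
        have "2 * real n * Q * M t \<le> 2 * real n * Q * (\<beta> / 3)"
          using Mt[OF \<open>t < D\<close>] Qp by (intro mult_left_mono) auto
        then show "LVL T [] t w (\<lambda>h i. \<bar>Hf h i\<bar> * (1 - ind h i)) \<le> 2 * real n * Q * (\<beta> / 3)"
          using lvl[OF tT] by linarith
      qed
      also have "\<dots> = real (dt_depth T) * (2 * real n * Q * (\<beta> / 3))" by simp
      also have "\<dots> \<le> real n * (2 * real n * Q * (\<beta> / 3))"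
        using Suc.prems(4,5) Qp \<beta>0 by (intro mult_right_mono) auto
      also have "\<dots> = P * \<beta> / 3 / real n"
        using n1 by (simp add: Q_def N_def NN_def field_simps power3_eq_cube)
      also have "\<dots> \<le> P * \<beta> / 3 / 1"
        by (rule divide_left_mono) (use n1 P0 \<beta>0 in auto)
      finally show ?thesis by simp
    qed
    have "E T [] (\<lambda>h b. w h b * Gh (Suc k) s h) \<le> P * \<beta>"
      using lhs splitT T1b T2b by linarith
    then show ?thesis unfolding P_def \<beta>_def by simp
  qed
qed

lemma sqrt_prod: fixes l :: nat shows "(\<And>i. i < l \<Longrightarrow> 0 \<le> f i) \<Longrightarrow> sqrt (\<Prod>i<l. f i) = (\<Prod>i<l. sqrt (f i))"
  by (induction l) (auto simp: real_sqrt_mult)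

lemma ln_target:
  assumes "1 \<le> n" "0 < p"
  shows "ln (4 * real n ^ i / p) = ln 4 + real i * ln (real n) - ln p"
proof -
  have "ln (4 * real n ^ i / p) = ln (4 * real n ^ i) - ln p" using assms by (simp add: ln_div)
  also have "ln (4 * real n ^ i) = ln 4 + ln (real n ^ i)" using assms by (intro ln_mult_pos) auto
  also have "ln (real n ^ i) = real i * ln (real n)" using assms by (intro ln_realpow)
  finally show ?thesis .
qed

lemma Lam_expand:
  assumes "1 \<le> n" "0 < p"
  shows "Lam n i p = ln 4 + real i * ln 2 + 3 * real i * ln (real n) - ln p"
proof -
  have N: "0 < NN n" using NN_ge2[OF assms(1)] by simp
  have "Lam n i p = ln (4 * NN n ^ i) - ln p" unfolding Lam_def using assms N by (simp add: ln_div)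
  also have "ln (4 * NN n ^ i) = ln 4 + ln (NN n ^ i)" using N by (intro ln_mult_pos) auto
  also have "ln (NN n ^ i) = real i * ln (NN n)" using N by (intro ln_realpow)
  also have "ln (NN n) = ln 2 + ln (real n ^ 3)" unfolding NN_def using assms by (intro ln_mult_pos) auto
  also have "ln (real n ^ 3) = 3 * ln (real n)" using assms by (subst ln_realpow) auto
  finally show ?thesis by (simp add: algebra_simps)
qed

lemma beta_final:
  assumes "1 \<le> n" "l \<le> n" "0 < p" "p \<le> 1" "D \<le> d"
  shows "beta n l D p \<le> sqrt (36 ^ l * real (d choose l)) * (\<Prod>i<l. sqrt (ln (4 * real n ^ i / p)))"
proof -
  have lnp: "ln p \<le> 0" using assms(3,4) by simp
  have Lt0: "0 \<le> ln (4 * real n ^ i / p)" for i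
  proof -
    have "0 \<le> real i * ln (real n)" using assms(1) by simp
    then show ?thesis using ln_target[OF assms(1,3), of i] ln4_ge1 lnp by linarith
  qed
  have each: "Lam n i p \<le> 4 * ln (4 * real n ^ i / p)" if "i < l" for i
  proof -
    have "real i * ln 2 \<le> 3 * ln 4 + real i * ln (real n) - 3 * ln p"
    proof (cases "n = 1")
      case True
      then have "i = 0" using that assms(2) by simp
      then show ?thesis using ln4_ge1 lnp by simp
    next
      case False
      then have "2 \<le> real n" using assms(1) by simp
      then have "ln 2 \<le> ln (real n)" by simp
      then have "real i * ln 2 \<le> real i * ln (real n)" by (intro mult_left_mono) auto
      then show ?thesis using ln4_ge1 lnp by simp
    qed
    then show ?thesis using Lam_expand[OF assms(1,3), of i] ln_target[OF assms(1,3), of i]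
      by (simp add: algebra_simps)
  qed
  have "(\<Prod>i<l. Lam n i p) \<le> (\<Prod>i<l. 4 * ln (4 * real n ^ i / p))"
    using each Lam_ge1[OF assms(1,3,4)] by (intro prod_mono) (meson dual_order.trans zero_le_one lessThan_iff)
  also have "\<dots> = 4 ^ l * (\<Prod>i<l. ln (4 * real n ^ i / p))" by (simp add: prod.distrib)
  finally have pr: "(\<Prod>i<l. Lam n i p) \<le> 4 ^ l * (\<Prod>i<l. ln (4 * real n ^ i / p))" .
  have c: "real (D choose l) \<le> real (d choose l)" using assms(5) by (simp add: binomial_right_mono)
  have p0: "0 \<le> (\<Prod>i<l. Lam n i p)" by (rule prod_Lam_nonneg[OF assms(1,3,4)])
  have "9 ^ l * real (D choose l) * (\<Prod>i<l. Lam n i p) \<le> 9 ^ l * real (d choose l) * (4 ^ l * (\<Prod>i<l. ln (4 * real n ^ i / p)))"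
    using c pr p0 by (intro mult_mono) auto
  also have "\<dots> = 36 ^ l * real (d choose l) * (\<Prod>i<l. ln (4 * real n ^ i / p))"
    by (simp add: power_mult_distrib[symmetric] mult_ac)
  finally have "beta n l D p \<le> sqrt (36 ^ l * real (d choose l) * (\<Prod>i<l. ln (4 * real n ^ i / p)))"
    unfolding beta_def by simp
  also have "\<dots> = sqrt (36 ^ l * real (d choose l)) * (\<Prod>i<l. sqrt (ln (4 * real n ^ i / p)))"
    using Lt0 by (simp add: real_sqrt_mult sqrt_prod)
  finally show ?thesis .
qed

theorem mainTheorem7:
  shows "\<exists>c::real. c > 0 \<and>
    (\<forall>(n::nat) (d::nat) (T::dtree) (f::(nat \<Rightarrow> int) \<Rightarrow> real) (p::real) (l::nat).
       (\<forall>x\<in>cube n. f x \<in> {0, 1}) \<longrightarrow>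
       dt_computes n T f \<longrightarrow>
       dt_depth T = d \<longrightarrow>
       p = cube_expect n f \<longrightarrow>
       l \<le> d \<longrightarrow>
       (\<Sum>S\<in>{S. S \<subseteq> {..<n} \<and> card S = l}. \<bar>fourier_coeff n f S\<bar>)
         \<le> sqrt (c ^ l * real (d choose l)) * p *
            (\<Prod>i<l. sqrt (ln (4 * real n ^ i / p))))"
proof (intro exI[of _ 36] conjI allI impI)
  show "(0::real) < 36" by simp
  fix n d :: nat and T :: dtree and f :: "(nat \<Rightarrow> int) \<Rightarrow> real" and p :: real and l :: nat
  assume f01: "\<forall>x\<in>cube n. f x \<in> {0, 1}" and comp: "dt_computes n T f" and dep: "dt_depth T = d"
    and pdef: "p = cube_expect n f" and ld: "l \<le> d"
  define T' where "T' = prune T []"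
  have gT': "good T'" unfolding T'_def by (rule prune_good)
  have vT': "dt_vars T' \<subseteq> {..<n}" using prune_vars[of T "[]"] comp unfolding T'_def dt_computes_def by auto
  have dT'd: "dt_depth T' \<le> d" using prune_depth[of T "[]"] dep unfolding T'_def by simp
  have dT'n: "dt_depth T' \<le> n"
  proof -
    have "dt_depth T' \<le> card (dt_vars T')" by (rule good_depth[OF gT'])
    also have "\<dots> \<le> card {..<n}" using vT' by (intro card_mono) auto
    finally show ?thesis by simp
  qed
  have feval: "f x = dt_eval T' x" if x: "x \<in> cube n" for x
  proof -
    have "\<forall>j. x j = -1 \<or> x j = 1"
    proof
      fix j
      show "x j = -1 \<or> x j = 1"
      proof (cases "j < n")
        case True then show ?thesis using x unfolding cube_def by blast
      next
        case False then show ?thesis using x unfolding cube_def by simp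
      qed
    qed
    then have "dt_eval T' x = dt_eval T x" unfolding T'_def by (intro prune_eval) auto
    then show ?thesis using comp x unfolding dt_computes_def by simp
  qed
  define s where "s = (\<lambda>S. sgn (fourier_coeff n f S))"
  define w where "w = (\<lambda>(h::hist) (b::bool). if b then 1 else (0::real))"
  define \<SS> where "\<SS> = {S. S \<subseteq> {..<n} \<and> card S = l}"
  have finSS: "finite \<SS>" unfolding \<SS>_def by simp
  have lhs: "(\<Sum>S\<in>\<SS>. \<bar>fourier_coeff n f S\<bar>) = E T' [] (\<lambda>h b. w h b * Gh l s h)"
  proof -
    have "(\<Sum>S\<in>\<SS>. \<bar>fourier_coeff n f S\<bar>) = (\<Sum>S\<in>\<SS>. s S * fourier_coeff n f S)"
      unfolding s_def by (intro sum.cong refl) (simp add: abs_if sgn_if)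
    also have "\<dots> = (\<Sum>S\<in>\<SS>. (\<Sum>x\<in>cube n. s S * (f x * (\<Prod>i\<in>S. real_of_int (x i))))) / 2 ^ n"
      unfolding fourier_coeff_def cube_expect_def by (simp add: sum_divide_distrib sum_distrib_left)
    also have "(\<Sum>S\<in>\<SS>. (\<Sum>x\<in>cube n. s S * (f x * (\<Prod>i\<in>S. real_of_int (x i)))))
        = (\<Sum>x\<in>cube n. f x * Gx l s {..<n} x)"
      unfolding Gx_def \<SS>_def by (subst sum.swap) (simp add: sum_distrib_left mult_ac)
    also have "\<dots> = (\<Sum>x\<in>cube n. dt_eval T' x * Gx l s {..<n} x)"
      by (intro sum.cong refl) (simp add: feval)
    also have "\<dots> = 2 ^ n * E T' [] (\<lambda>h b. (if b then 1 else 0) * Gx l s (hv h) (pt h))"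
      by (rule fourier_walk[OF gT' vT'])
    finally show ?thesis by (simp add: w_def Gh_def)
  qed
  have pE: "p = E T' [] w"
  proof -
    have "(\<Sum>x\<in>cube n. f x) = (\<Sum>x\<in>cube n. dt_eval T' x * Gx 0 (\<lambda>_. 1) {..<n} x)"
      by (intro sum.cong refl) (simp add: feval Gx_0)
    also have "\<dots> = 2 ^ n * E T' [] (\<lambda>h b. (if b then 1 else 0) * Gx 0 (\<lambda>_. 1) (hv h) (pt h))"
      by (rule fourier_walk[OF gT' vT'])
    also have "(\<lambda>h b. (if b then 1 else 0) * Gx 0 (\<lambda>_. 1) (hv h) (pt h)) = w"
      by (intro ext) (simp add: w_def Gx_0)
    finally show ?thesis unfolding pdef cube_expect_def by simp
  qed
  have w0: "\<And>h b. 0 \<le> w h b" and w1: "\<And>h b. w h b \<le> 1" by (auto simp: w_def)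
  have p0: "0 \<le> p" unfolding pE by (rule E_nonneg) (rule w0)
  have p1: "p \<le> 1" unfolding pE by (rule E_le1) (rule w1)
  have rhs0: "0 \<le> sqrt (36 ^ l * real (d choose l)) * p * (\<Prod>i<l. sqrt (ln (4 * real n ^ i / p)))"
  proof -
    have "0 \<le> (\<Prod>i<l. sqrt (ln (4 * real n ^ i / p)))"
    proof (rule prod_nonneg)
      fix i assume "i \<in> {..<l}"
      show "0 \<le> sqrt (ln (4 * real n ^ i / p))"
      proof (cases "real n ^ i = 0 \<or> p = 0")
        case True then show ?thesis by (auto simp: power_0_left)
      next
        case False
        then have "0 < real n ^ i" "0 < p" using p0 by auto
        have "1 \<le> real n ^ i"
        proof (cases "n = 0")
          case True
          then have "i = 0" using \<open>0 < real n ^ i\<close> by (cases i) auto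
          then show ?thesis by simp
        next
          case False
          then have "1 \<le> real n" by simp
          then show ?thesis by (rule one_le_power)
        qed
        then have "4 * real n ^ i / p \<ge> 1" using p1 \<open>0 < p\<close> by (simp add: le_divide_eq)
        then show ?thesis by simp
      qed
    qed
    then show ?thesis using p0 by simp
  qed
  show "(\<Sum>S\<in>{S. S \<subseteq> {..<n} \<and> card S = l}. \<bar>fourier_coeff n f S\<bar>)
         \<le> sqrt (36 ^ l * real (d choose l)) * p * (\<Prod>i<l. sqrt (ln (4 * real n ^ i / p)))"
  proof (cases "l \<le> n")
    case False
    have "\<SS> = {}"
    proof -
      have "card S \<le> n" if "S \<subseteq> {..<n}" for S using card_mono[OF _ that] by simp
      then show ?thesis using False unfolding \<SS>_def by fastforce
    qed
    then have e: "{S. S \<subseteq> {..<n} \<and> card S = l} = {}" unfolding \<SS>_def .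
    show ?thesis using rhs0 by (simp only: e sum.empty)
  next
    case True
    have H: "E T' [] (\<lambda>h b. w h b * Gh l s h) \<le> E T' [] w * beta n l (dt_depth T') (E T' [] w)"
      by (rule Hk[OF True gT' vT' order_refl dT'n _ w0 w1]) (simp add: s_def abs_sgn_eq)
    then have H': "(\<Sum>S\<in>\<SS>. \<bar>fourier_coeff n f S\<bar>) \<le> p * beta n l (dt_depth T') p"
      using lhs pE by simp
    show ?thesis
    proof (cases "p = 0")
      case True
      then show ?thesis using H' unfolding \<SS>_def by simp
    next
      case False
      then have pp: "0 < p" using p0 by simp
      show ?thesis
      proof (cases "n = 0")
        case True
        then have "l = 0" using \<open>l \<le> n\<close> by simp
        then show ?thesis using H' unfolding \<SS>_def by (simp add: beta_def)
      next
        case False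
        then have n1: "1 \<le> n" by simp
        have "p * beta n l (dt_depth T') p \<le> p * (sqrt (36 ^ l * real (d choose l)) * (\<Prod>i<l. sqrt (ln (4 * real n ^ i / p))))"
          using beta_final[OF n1 \<open>l \<le> n\<close> pp p1 dT'd] p0 by (intro mult_left_mono) auto
        then show ?thesis using H' unfolding \<SS>_def by (simp add: mult_ac)
      qed
    qed
  qed
qed


end
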